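(* $\widetilde{\mathbb{R}}$ and $\widetilde{\mathbb{R}}_{sm}$ are reduced normal $f$-rings.
   Context: Let $I=(0,1]$. $\widetilde{\mathbb{R}}=\mathcal{E}_M/\mathcal{N}$ with $\mathcal{E}_M=\{(r_\varepsilon)\in\mathbb{R}^I:\exists N: |r_\varepsilon|=O(\varepsilon^{-N})\}$, $\mathcal{N}=\{(r_\varepsilon)\in\mathbb{R}^I:\forall m: |r_\varepsilon|=O(\varepsilon^m)\}$; $\widetilde{\mathbb{R}}_{sm}$ (resp. $\widetilde{\mathbb{R}}_{co}$) is defined in the same way using only nets with $\varepsilon\mapsto r_\varepsilon$ smooth (resp. continuous), and the natural map $\tau_{sm}:\widetilde{\mathbb{R}}_{sm}\to\widetilde{\mathbb{R}}_{co}$ is a ring isomorphism. Order: $r\le s$ iff there are representatives with $r_\varepsilon\le s_\varepsilon$ for all $\varepsilon$; lattice operations are given by componentwise $\max$, $\min$ of representatives (in $\widetilde{\mathbb{R}}_{sm}$ transported via $\tau_{sm}^{-1}$ from $\widetilde{\mathbb{R}}_{co}$). A ring is reduced if it has no nonzero nilpotents. An $f$-ring is a commutative ring with 1 which is a lattice-ordered ring such that $(r\wedge s)t=rt\wedge st$ whenever $t\ge0$. A reduced commutative $f$-ring $R$ with 1 is normal if for all $r,s\in R$ with $rs=0$ one has $R=\mathrm{Ann}(r)+\mathrm{Ann}(s)$, where $\mathrm{Ann}(r)=\{t\in R: rt=0\}$. *)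

theory Defs
  imports "HOL-Analysis.Analysis" "HOL-Library.Landau_Symbols" "HOL-Algebra.Ring"
begin

text \<open>Nets are modelled as functions real => real; only their values on I = (0,1]
  matter (for the quotient only the behaviour as eps -> 0+ matters).\<close>

definition I :: "real set" where "I = {0<..1}"

definition moderate :: "(real \<Rightarrow> real) \<Rightarrow> bool" where
  "moderate r \<longleftrightarrow> (\<exists>N::nat. r \<in> O[at_right 0](\<lambda>\<epsilon>. inverse (\<epsilon> ^ N)))"

definition negligible :: "(real \<Rightarrow> real) \<Rightarrow> bool" where
  "negligible r \<longleftrightarrow> (\<forall>m::nat. r \<in> O[at_right 0](\<lambda>\<epsilon>. \<epsilon> ^ m))"

definition smooth_net :: "(real \<Rightarrow> real) \<Rightarrow> bool" where
  "smooth_net r \<longleftrightarrow> (\<exists>D :: nat \<Rightarrow> real \<Rightarrow> real. D 0 = r \<and>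
      (\<forall>k. \<forall>x\<in>I. (D k has_real_derivative D (Suc k) x) (at x within I)))"

definition cont_net :: "(real \<Rightarrow> real) \<Rightarrow> bool" where
  "cont_net r \<longleftrightarrow> continuous_on I r"

definition all_net :: "(real \<Rightarrow> real) \<Rightarrow> bool" where
  "all_net r \<longleftrightarrow> True"

definition EM :: "((real \<Rightarrow> real) \<Rightarrow> bool) \<Rightarrow> (real \<Rightarrow> real) set" where
  "EM P = {r. P r \<and> moderate r}"

definition nrel :: "((real \<Rightarrow> real) \<Rightarrow> bool) \<Rightarrow> ((real \<Rightarrow> real) \<times> (real \<Rightarrow> real)) set" where
  "nrel P = {(r, s). r \<in> EM P \<and> s \<in> EM P \<and> negligible (\<lambda>\<epsilon>. r \<epsilon> - s \<epsilon>)}"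

definition cls :: "((real \<Rightarrow> real) \<Rightarrow> bool) \<Rightarrow> (real \<Rightarrow> real) \<Rightarrow> (real \<Rightarrow> real) set" where
  "cls P r = nrel P `` {r}"

definition rep :: "(real \<Rightarrow> real) set \<Rightarrow> (real \<Rightarrow> real)" where
  "rep A = (SOME r. r \<in> A)"

definition gen_ring :: "((real \<Rightarrow> real) \<Rightarrow> bool) \<Rightarrow> (real \<Rightarrow> real) set ring" where
  "gen_ring P = \<lparr> carrier = EM P // nrel P,
      monoid.mult = (\<lambda>A B. cls P (\<lambda>\<epsilon>. rep A \<epsilon> * rep B \<epsilon>)),
      one = cls P (\<lambda>_. 1),
      zero = cls P (\<lambda>_. 0),
      add = (\<lambda>A B. cls P (\<lambda>\<epsilon>. rep A \<epsilon> + rep B \<epsilon>)) \<rparr>"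

definition gen_le :: "((real \<Rightarrow> real) \<Rightarrow> bool) \<Rightarrow> (real \<Rightarrow> real) set \<Rightarrow> (real \<Rightarrow> real) set \<Rightarrow> bool" where
  "gen_le P A B \<longleftrightarrow> (\<exists>r\<in>A. \<exists>s\<in>B. \<forall>\<epsilon>\<in>I. r \<epsilon> \<le> s \<epsilon>)"

definition gen_meet :: "((real \<Rightarrow> real) \<Rightarrow> bool) \<Rightarrow> (real \<Rightarrow> real) set \<Rightarrow> (real \<Rightarrow> real) set \<Rightarrow> (real \<Rightarrow> real) set" where
  "gen_meet P A B = cls P (\<lambda>\<epsilon>. min (rep A \<epsilon>) (rep B \<epsilon>))"

definition gen_join :: "((real \<Rightarrow> real) \<Rightarrow> bool) \<Rightarrow> (real \<Rightarrow> real) set \<Rightarrow> (real \<Rightarrow> real) set \<Rightarrow> (real \<Rightarrow> real) set" where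
  "gen_join P A B = cls P (\<lambda>\<epsilon>. max (rep A \<epsilon>) (rep B \<epsilon>))"

definition Rt :: "(real \<Rightarrow> real) set ring" where "Rt = gen_ring all_net"
definition Rco :: "(real \<Rightarrow> real) set ring" where "Rco = gen_ring cont_net"
definition Rsm :: "(real \<Rightarrow> real) set ring" where "Rsm = gen_ring smooth_net"

definition le_t where "le_t = gen_le all_net"
definition meet_t where "meet_t = gen_meet all_net"
definition join_t where "join_t = gen_join all_net"

definition le_sm where "le_sm = gen_le smooth_net"

definition tau_sm :: "(real \<Rightarrow> real) set \<Rightarrow> (real \<Rightarrow> real) set" where
  "tau_sm A = cls cont_net (rep A)"

definition meet_sm where
  "meet_sm A B = the_inv_into (carrier Rsm) tau_sm (gen_meet cont_net (tau_sm A) (tau_sm B))"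

definition join_sm where
  "join_sm A B = the_inv_into (carrier Rsm) tau_sm (gen_join cont_net (tau_sm A) (tau_sm B))"

definition lattice_ordered_ring ::
  "('a, 'b) ring_scheme \<Rightarrow> ('a \<Rightarrow> 'a \<Rightarrow> bool) \<Rightarrow> ('a \<Rightarrow> 'a \<Rightarrow> 'a) \<Rightarrow> ('a \<Rightarrow> 'a \<Rightarrow> 'a) \<Rightarrow> bool" where
  "lattice_ordered_ring R leq mt jn \<longleftrightarrow> ring R \<and>
     (\<forall>x\<in>carrier R. leq x x) \<and>
     (\<forall>x\<in>carrier R. \<forall>y\<in>carrier R. leq x y \<and> leq y x \<longrightarrow> x = y) \<and>
     (\<forall>x\<in>carrier R. \<forall>y\<in>carrier R. \<forall>z\<in>carrier R. leq x y \<and> leq y z \<longrightarrow> leq x z) \<and>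
     (\<forall>x\<in>carrier R. \<forall>y\<in>carrier R. \<forall>z\<in>carrier R. leq x y \<longrightarrow> leq (x \<oplus>\<^bsub>R\<^esub> z) (y \<oplus>\<^bsub>R\<^esub> z)) \<and>
     (\<forall>x\<in>carrier R. \<forall>y\<in>carrier R. leq \<zero>\<^bsub>R\<^esub> x \<and> leq \<zero>\<^bsub>R\<^esub> y \<longrightarrow> leq \<zero>\<^bsub>R\<^esub> (x \<otimes>\<^bsub>R\<^esub> y)) \<and>
     (\<forall>x\<in>carrier R. \<forall>y\<in>carrier R. mt x y \<in> carrier R \<and> leq (mt x y) x \<and> leq (mt x y) y \<and>
        (\<forall>z\<in>carrier R. leq z x \<and> leq z y \<longrightarrow> leq z (mt x y))) \<and>
     (\<forall>x\<in>carrier R. \<forall>y\<in>carrier R. jn x y \<in> carrier R \<and> leq x (jn x y) \<and> leq y (jn x y) \<and>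
        (\<forall>z\<in>carrier R. leq x z \<and> leq y z \<longrightarrow> leq (jn x y) z))"

definition f_ring ::
  "('a, 'b) ring_scheme \<Rightarrow> ('a \<Rightarrow> 'a \<Rightarrow> bool) \<Rightarrow> ('a \<Rightarrow> 'a \<Rightarrow> 'a) \<Rightarrow> ('a \<Rightarrow> 'a \<Rightarrow> 'a) \<Rightarrow> bool" where
  "f_ring R leq mt jn \<longleftrightarrow> cring R \<and> lattice_ordered_ring R leq mt jn \<and>
     (\<forall>r\<in>carrier R. \<forall>s\<in>carrier R. \<forall>t\<in>carrier R. leq \<zero>\<^bsub>R\<^esub> t \<longrightarrow>
        mt r s \<otimes>\<^bsub>R\<^esub> t = mt (r \<otimes>\<^bsub>R\<^esub> t) (s \<otimes>\<^bsub>R\<^esub> t))"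

definition reduced_ring :: "('a, 'b) ring_scheme \<Rightarrow> bool" where
  "reduced_ring R \<longleftrightarrow> (\<forall>x\<in>carrier R. \<forall>n::nat. x [^]\<^bsub>R\<^esub> n = \<zero>\<^bsub>R\<^esub> \<longrightarrow> x = \<zero>\<^bsub>R\<^esub>)"

definition Ann :: "('a, 'b) ring_scheme \<Rightarrow> 'a \<Rightarrow> 'a set" where
  "Ann R r = {t \<in> carrier R. r \<otimes>\<^bsub>R\<^esub> t = \<zero>\<^bsub>R\<^esub>}"

definition normal_ring :: "('a, 'b) ring_scheme \<Rightarrow> bool" where
  "normal_ring R \<longleftrightarrow> (\<forall>r\<in>carrier R. \<forall>s\<in>carrier R. r \<otimes>\<^bsub>R\<^esub> s = \<zero>\<^bsub>R\<^esub> \<longrightarrow>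
      carrier R = {a \<oplus>\<^bsub>R\<^esub> b | a b. a \<in> Ann R r \<and> b \<in> Ann R s})"

definition reduced_normal_f_ring ::
  "('a, 'b) ring_scheme \<Rightarrow> ('a \<Rightarrow> 'a \<Rightarrow> bool) \<Rightarrow> ('a \<Rightarrow> 'a \<Rightarrow> 'a) \<Rightarrow> ('a \<Rightarrow> 'a \<Rightarrow> 'a) \<Rightarrow> bool" where
  "reduced_normal_f_ring R leq mt jn \<longleftrightarrow>
     f_ring R leq mt jn \<and> reduced_ring R \<and> normal_ring R"

end

theory Submission
  imports Defs
begin

lemma ev_small:
  fixes c :: real assumes "c > 0"
  shows "\<forall>\<^sub>F x in at_right 0. 0 < x \<and> x < 1 \<and> c * x < 1"
proof -
  have "min 1 (1/c) > 0" using assms by simp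
  then show ?thesis unfolding eventually_at_right_field
    apply (rule_tac x="min 1 (1/c)" in exI)
    using assms by (auto simp: field_simps)
qed

lemma ev_I: "\<forall>\<^sub>F x in at_right 0. x \<in> I"
  using ev_small[OF zero_less_one] unfolding I_def by (auto elim: eventually_mono)

lemma neg_iff: "negligible f \<longleftrightarrow> (\<forall>m. \<forall>\<^sub>F x in at_right 0. \<bar>f x\<bar> \<le> x ^ m)"
proof
  assume H: "negligible f"
  show "\<forall>m. \<forall>\<^sub>F x in at_right 0. \<bar>f x\<bar> \<le> x ^ m"
  proof
    fix m
    from H obtain c where c: "c > 0" "\<forall>\<^sub>F x in at_right 0. norm (f x) \<le> c * norm (x ^ Suc m)"
      unfolding negligible_def bigo_def by blast
    show "\<forall>\<^sub>F x in at_right 0. \<bar>f x\<bar> \<le> x ^ m"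
      using c(2) ev_small[OF c(1)]
    proof eventually_elim
      case (elim x)
      then have "\<bar>f x\<bar> \<le> (c * x) * x ^ m" by (simp add: abs_mult mult.assoc)
      also have "\<dots> \<le> 1 * x ^ m" using elim by (intro mult_right_mono) auto
      finally show ?case by simp
    qed
  qed
next
  assume H: "\<forall>m. \<forall>\<^sub>F x in at_right 0. \<bar>f x\<bar> \<le> x ^ m"
  show "negligible f" unfolding negligible_def bigo_def
  proof (intro allI CollectI exI conjI)
    fix m
    show "(1::real) > 0" by simp
    show "\<forall>\<^sub>F x in at_right 0. norm (f x) \<le> 1 * norm (x ^ m)"
      using H[rule_format, of m] ev_small[OF zero_less_one]
      by eventually_elim (simp add: abs_mult)
  qed
qed

lemma mod_iff: "moderate f \<longleftrightarrow> (\<exists>N. \<forall>\<^sub>F x in at_right 0. \<bar>f x\<bar> \<le> inverse (x ^ N))"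
proof
  assume H: "moderate f"
  from H obtain c N where c: "c > 0" "\<forall>\<^sub>F x in at_right 0. norm (f x) \<le> c * norm (inverse (x ^ N))"
    unfolding moderate_def bigo_def by blast
  have "\<forall>\<^sub>F x in at_right 0. \<bar>f x\<bar> \<le> inverse (x ^ Suc N)"
    using c(2) ev_small[OF c(1)]
  proof eventually_elim
    case (elim x)
    then have "\<bar>f x\<bar> \<le> c * inverse (x ^ N)" by (simp add: abs_mult)
    also have "\<dots> = (c * x) * inverse (x ^ Suc N)" using elim by (simp add: field_simps)
    also have "\<dots> \<le> 1 * inverse (x ^ Suc N)" using elim by (intro mult_right_mono) auto
    finally show ?case by simp
  qed
  then show "\<exists>N. \<forall>\<^sub>F x in at_right 0. \<bar>f x\<bar> \<le> inverse (x ^ N)" by blast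
next
  assume H: "\<exists>N. \<forall>\<^sub>F x in at_right 0. \<bar>f x\<bar> \<le> inverse (x ^ N)"
  then obtain N where N: "\<forall>\<^sub>F x in at_right 0. \<bar>f x\<bar> \<le> inverse (x ^ N)" by blast
  show "moderate f" unfolding moderate_def bigo_def
  proof (intro exI CollectI conjI)
    show "(1::real) > 0" by simp
    show "\<forall>\<^sub>F x in at_right 0. norm (f x) \<le> 1 * norm (inverse (x ^ N))"
      using N ev_small[OF zero_less_one]
      by eventually_elim (simp add: abs_mult)
  qed
qed


lemma negI:
  assumes "\<And>m. \<exists>c. \<forall>\<^sub>F x in at_right 0. \<bar>f x\<bar> \<le> c * x ^ m"
  shows "negligible f"
  unfolding negligible_def bigo_def
proof (intro allI CollectI)
  fix m
  obtain c where c: "\<forall>\<^sub>F x in at_right 0. \<bar>f x\<bar> \<le> c * x ^ m" using assms by blast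
  have "\<forall>\<^sub>F x in at_right 0. norm (f x) \<le> max c 1 * norm (x ^ m)"
    using c ev_small[OF zero_less_one]
  proof eventually_elim
    case (elim x)
    then have "c * x ^ m \<le> max c 1 * x ^ m" by (intro mult_right_mono) auto
    then have "\<bar>f x\<bar> \<le> max c 1 * x ^ m" using elim(1) by linarith
    moreover have "norm (x ^ m) = x ^ m" using elim by (simp add: power_abs)
    ultimately show ?case by simp
  qed
  then show "\<exists>c>0. \<forall>\<^sub>F x in at_right 0. norm (f x) \<le> c * norm (x ^ m)"
    by (intro exI[of _ "max c 1"]) auto
qed

lemma modI:
  assumes "\<exists>c N. \<forall>\<^sub>F x in at_right 0. \<bar>f x\<bar> \<le> c * inverse (x ^ N)"
  shows "moderate f"
  unfolding moderate_def bigo_def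
proof -
  obtain c N where c: "\<forall>\<^sub>F x in at_right 0. \<bar>f x\<bar> \<le> c * inverse (x ^ N)" using assms by blast
  have "\<forall>\<^sub>F x in at_right 0. norm (f x) \<le> max c 1 * norm (inverse (x ^ N))"
    using c ev_small[OF zero_less_one]
  proof eventually_elim
    case (elim x)
    then have "c * inverse (x ^ N) \<le> max c 1 * inverse (x ^ N)" by (intro mult_right_mono) auto
    then have "\<bar>f x\<bar> \<le> max c 1 * inverse (x ^ N)" using elim(1) by linarith
    moreover have "norm (inverse (x ^ N)) = inverse (x ^ N)" using elim by (simp add: power_abs)
    ultimately show ?case by simp
  qed
  then show "\<exists>N. f \<in> {f. \<exists>c>0. \<forall>\<^sub>F x in at_right 0. norm (f x) \<le> c * norm (inverse (x ^ N))}"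
    by (intro exI[of _ N]) (auto intro!: exI[of _ "max c 1"])
qed

lemma neg_le:
  assumes "negligible g" "\<forall>\<^sub>F x in at_right 0. \<bar>f x\<bar> \<le> \<bar>g x\<bar>"
  shows "negligible f"
  unfolding neg_iff
proof
  fix m show "\<forall>\<^sub>F x in at_right 0. \<bar>f x\<bar> \<le> x ^ m"
    using assms(1)[unfolded neg_iff, rule_format, of m] assms(2) by eventually_elim auto
qed

lemma mod_le:
  assumes "moderate g" "\<forall>\<^sub>F x in at_right 0. \<bar>f x\<bar> \<le> \<bar>g x\<bar>"
  shows "moderate f"
proof -
  obtain N where N: "\<forall>\<^sub>F x in at_right 0. \<bar>g x\<bar> \<le> inverse (x ^ N)" using assms(1) mod_iff by blast
  show ?thesis unfolding mod_iff
    by (rule exI[of _ N]) (use N assms(2) in eventually_elim, auto)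
qed

lemma neg_0: "negligible (\<lambda>_. 0)"
  unfolding neg_iff using ev_small[OF zero_less_one] by (auto elim: eventually_mono)

lemma neg_add:
  assumes "negligible f" "negligible g" shows "negligible (\<lambda>x. f x + g x)"
proof (rule negI)
  fix m
  have "\<forall>\<^sub>F x in at_right 0. \<bar>f x + g x\<bar> \<le> 2 * x ^ m"
    using assms(1)[unfolded neg_iff, rule_format, of m] assms(2)[unfolded neg_iff, rule_format, of m]
    by eventually_elim auto
  then show "\<exists>c. \<forall>\<^sub>F x in at_right 0. \<bar>f x + g x\<bar> \<le> c * x ^ m" by blast
qed

lemma neg_uminus: "negligible f \<Longrightarrow> negligible (\<lambda>x. - f x)"
  by (erule neg_le) auto

lemma neg_diff: "negligible f \<Longrightarrow> negligible g \<Longrightarrow> negligible (\<lambda>x. f x - g x)"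
  using neg_add[of f "\<lambda>x. - g x"] neg_uminus[of g] by simp

lemma neg_mult:
  assumes "negligible f" "moderate g" shows "negligible (\<lambda>x. f x * g x)"
proof -
  obtain N where N: "\<forall>\<^sub>F x in at_right 0. \<bar>g x\<bar> \<le> inverse (x ^ N)" using assms(2) mod_iff by blast
  show ?thesis unfolding neg_iff
  proof
    fix m
    show "\<forall>\<^sub>F x in at_right 0. \<bar>f x * g x\<bar> \<le> x ^ m"
      using assms(1)[unfolded neg_iff, rule_format, of "m + N"] N ev_small[OF zero_less_one]
    proof eventually_elim
      case (elim x)
      have "\<bar>f x * g x\<bar> \<le> x ^ (m + N) * inverse (x ^ N)"
        unfolding abs_mult using elim by (intro mult_mono) auto
      also have "\<dots> = x ^ m" using elim by (simp add: power_add)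
      finally show ?case .
    qed
  qed
qed

lemma mod_const: "moderate (\<lambda>_. c)"
  by (rule modI, rule exI[of _ "\<bar>c\<bar>"], rule exI[of _ 0]) auto

lemma neg_mod: "negligible f \<Longrightarrow> moderate f"
  unfolding neg_iff mod_iff
  by (intro exI[of _ 0]) (auto elim: allE[of _ 0])

lemma mod_add:
  assumes "moderate f" "moderate g" shows "moderate (\<lambda>x. f x + g x)"
proof -
  obtain N where N: "\<forall>\<^sub>F x in at_right 0. \<bar>f x\<bar> \<le> inverse (x ^ N)" using assms(1) mod_iff by blast
  obtain M where M: "\<forall>\<^sub>F x in at_right 0. \<bar>g x\<bar> \<le> inverse (x ^ M)" using assms(2) mod_iff by blast
  have "\<forall>\<^sub>F x in at_right 0. \<bar>f x + g x\<bar> \<le> 2 * inverse (x ^ (N + M))"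
    using N M ev_small[OF zero_less_one]
  proof eventually_elim
    case (elim x)
    have a: "inverse (x ^ N) \<le> inverse (x ^ (N + M))"
      using elim by (intro le_imp_inverse_le) (auto simp: power_add intro!: mult_left_le power_le_one)
    have b: "inverse (x ^ M) \<le> inverse (x ^ (N + M))"
      using elim by (intro le_imp_inverse_le) (auto simp: power_add intro!: mult_right_le_one_le power_le_one)
    show ?case using elim a b abs_triangle_ineq[of "f x" "g x"] by linarith
  qed
  then show ?thesis by (intro modI) blast
qed

lemma mod_mult:
  assumes "moderate f" "moderate g" shows "moderate (\<lambda>x. f x * g x)"
proof -
  obtain N where N: "\<forall>\<^sub>F x in at_right 0. \<bar>f x\<bar> \<le> inverse (x ^ N)" using assms(1) mod_iff by blast
  obtain M where M: "\<forall>\<^sub>F x in at_right 0. \<bar>g x\<bar> \<le> inverse (x ^ M)" using assms(2) mod_iff by blast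
  have "\<forall>\<^sub>F x in at_right 0. \<bar>f x * g x\<bar> \<le> 1 * inverse (x ^ (N + M))"
    using N M ev_small[OF zero_less_one]
  proof eventually_elim
    case (elim x)
    have "\<bar>f x * g x\<bar> \<le> inverse (x ^ N) * inverse (x ^ M)"
      unfolding abs_mult using elim by (intro mult_mono) auto
    then show ?case by (simp add: power_add)
  qed
  then show ?thesis by (intro modI) blast
qed

lemma mod_uminus: "moderate f \<Longrightarrow> moderate (\<lambda>x. - f x)"
  by (erule mod_le) auto

lemma mod_diff: "moderate f \<Longrightarrow> moderate g \<Longrightarrow> moderate (\<lambda>x. f x - g x)"
  using mod_add[of f "\<lambda>x. - g x"] mod_uminus[of g] by simp

lemma neg_pow:
  assumes "negligible (\<lambda>x. f x ^ Suc n)" shows "negligible f"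
  unfolding neg_iff
proof
  fix m
  show "\<forall>\<^sub>F x in at_right 0. \<bar>f x\<bar> \<le> x ^ m"
    using assms[unfolded neg_iff, rule_format, of "m * Suc n"] ev_small[OF zero_less_one]
  proof eventually_elim
    case (elim x)
    have e1: "x^(m*Suc n) = (x^m)^Suc n" by (rule power_mult)
    have e2: "\<bar>f x ^ Suc n\<bar> = \<bar>f x\<bar>^Suc n" by (rule power_abs)
    have "\<bar>f x\<bar> ^ Suc n \<le> (x ^ m) ^ Suc n" using elim(1) unfolding e1 e2 .
    moreover have "0 \<le> x ^ m" using elim by simp
    ultimately show ?case by (rule power_le_imp_le_base)
  qed
qed

lemma neg_sqrt:
  assumes "negligible f" shows "negligible (\<lambda>x. sqrt \<bar>f x\<bar>)"
  unfolding neg_iff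
proof
  fix m
  show "\<forall>\<^sub>F x in at_right 0. \<bar>sqrt \<bar>f x\<bar>\<bar> \<le> x ^ m"
    using assms[unfolded neg_iff, rule_format, of "2 * m"] ev_small[OF zero_less_one]
  proof eventually_elim
    case (elim x)
    then have "sqrt \<bar>f x\<bar> \<le> sqrt ((x ^ m)^2)" by (simp add: power_mult[symmetric] mult.commute)
    then show ?case using elim by simp
  qed
qed

lemma neg_expinv: "negligible (\<lambda>x. exp (- inverse x))"
proof (rule negI)
  fix m
  show "\<exists>c. \<forall>\<^sub>F x in at_right 0. \<bar>exp (- inverse x)\<bar> \<le> c * (x::real) ^ m"
  proof -
    have "\<forall>\<^sub>F x in at_right 0. \<bar>exp (- inverse x)\<bar> \<le> real (Suc m) ^ Suc m * x ^ m"
      using ev_small[OF zero_less_one]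
    proof eventually_elim
      case (elim x)
      define n where "n = real (Suc m)"
      have n: "n \<ge> 1" by (simp add: n_def)
      have "inverse (n * x) \<le> 1 + inverse (n * x)" by simp
      also have "\<dots> \<le> exp (inverse (n * x))" by (rule exp_ge_add_one_self)
      finally have "inverse (n * x) ^ Suc m \<le> exp (inverse (n * x)) ^ Suc m"
        using elim n by (intro power_mono) auto
      also have "\<dots> = exp (n * inverse (n * x))" unfolding n_def by (rule exp_of_nat_mult[symmetric])
      also have "exp (n * inverse (n * x)) = exp (inverse x)" using n by (simp add: inverse_mult_distrib)
      finally have A: "inverse (n * x) ^ Suc m \<le> exp (inverse x)" .
      have "exp (- inverse x) = inverse (exp (inverse x))" by (simp add: exp_minus)
      also have "\<dots> \<le> inverse (inverse (n * x) ^ Suc m)"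
        using elim n A by (intro le_imp_inverse_le) auto
      also have "\<dots> = n ^ Suc m * x ^ Suc m" by (simp add: power_mult_distrib field_simps)
      also have "\<dots> \<le> n ^ Suc m * x ^ m"
        using elim n by (intro mult_left_mono) (auto intro: power_decreasing)
      finally show ?case by (simp add: n_def)
    qed
    then show ?thesis by (rule exI)
  qed
qed


section \<open>Generic quotient\<close>

definition adm :: "((real \<Rightarrow> real) \<Rightarrow> bool) \<Rightarrow> bool" where
  "adm P \<longleftrightarrow> (\<forall>c. P (\<lambda>_. c)) \<and> (\<forall>f g. P f \<longrightarrow> P g \<longrightarrow> P (\<lambda>x. f x + g x)) \<and>
      (\<forall>f g. P f \<longrightarrow> P g \<longrightarrow> P (\<lambda>x. f x * g x))"

lemma adm_const: "adm P \<Longrightarrow> P (\<lambda>_. c)" unfolding adm_def by blast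
lemma adm_add: "adm P \<Longrightarrow> P f \<Longrightarrow> P g \<Longrightarrow> P (\<lambda>x. f x + g x)" unfolding adm_def by blast
lemma adm_mult: "adm P \<Longrightarrow> P f \<Longrightarrow> P g \<Longrightarrow> P (\<lambda>x. f x * g x)" unfolding adm_def by blast
lemma adm_uminus: "adm P \<Longrightarrow> P f \<Longrightarrow> P (\<lambda>x. - f x)"
  using adm_mult[of P "\<lambda>_. -1" f] adm_const[of P "-1"] by simp
lemma adm_diff: "adm P \<Longrightarrow> P f \<Longrightarrow> P g \<Longrightarrow> P (\<lambda>x. f x - g x)"
  using adm_add[of P f "\<lambda>x. - g x"] adm_uminus[of P g] by simp

lemma EM_const: "adm P \<Longrightarrow> (\<lambda>_. c) \<in> EM P"
  by (simp add: EM_def adm_const mod_const)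
lemma EM_add: "adm P \<Longrightarrow> f \<in> EM P \<Longrightarrow> g \<in> EM P \<Longrightarrow> (\<lambda>x. f x + g x) \<in> EM P"
  by (simp add: EM_def adm_add mod_add)
lemma EM_mult: "adm P \<Longrightarrow> f \<in> EM P \<Longrightarrow> g \<in> EM P \<Longrightarrow> (\<lambda>x. f x * g x) \<in> EM P"
  by (simp add: EM_def adm_mult mod_mult)
lemma EM_uminus: "adm P \<Longrightarrow> f \<in> EM P \<Longrightarrow> (\<lambda>x. - f x) \<in> EM P"
  by (simp add: EM_def adm_uminus mod_uminus)
lemma EM_diff: "adm P \<Longrightarrow> f \<in> EM P \<Longrightarrow> g \<in> EM P \<Longrightarrow> (\<lambda>x. f x - g x) \<in> EM P"
  by (simp add: EM_def adm_diff mod_diff)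

lemma equiv_nrel: "equiv (EM P) (nrel P)"
proof (rule equivI)
  show "refl_on (EM P) (nrel P)"
    unfolding refl_on_def nrel_def using neg_0 by auto
  show "sym (nrel P)"
    unfolding sym_def nrel_def using neg_uminus by fastforce
  show "trans (nrel P)"
    unfolding trans_def nrel_def using neg_add by fastforce
  show "nrel P \<subseteq> EM P \<times> EM P" unfolding nrel_def by auto
qed

lemma mem_cls: "s \<in> cls P r \<longleftrightarrow> r \<in> EM P \<and> s \<in> EM P \<and> negligible (\<lambda>x. r x - s x)"
  unfolding cls_def nrel_def by auto

lemma cls_in: "r \<in> EM P \<Longrightarrow> cls P r \<in> EM P // nrel P"
  unfolding cls_def by (rule quotientI)

lemma self_in_cls: "r \<in> EM P \<Longrightarrow> r \<in> cls P r"
  unfolding mem_cls using neg_0 by simp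

lemma cls_eq: "r \<in> EM P \<Longrightarrow> s \<in> EM P \<Longrightarrow> negligible (\<lambda>x. r x - s x) \<Longrightarrow> cls P r = cls P s"
  unfolding cls_def
  by (rule equiv_class_eq[OF equiv_nrel]) (simp add: nrel_def)

lemma cls_eq_iff: "r \<in> EM P \<Longrightarrow> s \<in> EM P \<Longrightarrow> cls P r = cls P s \<longleftrightarrow> negligible (\<lambda>x. r x - s x)"
  using cls_eq[of r P s] self_in_cls[of s P] mem_cls[of s P r] by auto

lemma quot_cls: "A \<in> EM P // nrel P \<Longrightarrow> s \<in> A \<Longrightarrow> A = cls P s \<and> s \<in> EM P"
proof -
  assume A: "A \<in> EM P // nrel P" and s: "s \<in> A"
  obtain r where r: "r \<in> EM P" "A = nrel P `` {r}" using A by (auto elim: quotientE)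
  have rs: "(r, s) \<in> nrel P" using s r by auto
  then have "s \<in> EM P" unfolding nrel_def by auto
  moreover have "nrel P `` {r} = nrel P `` {s}" by (rule equiv_class_eq[OF equiv_nrel rs])
  ultimately show ?thesis using r unfolding cls_def by simp
qed

lemma quot_nonempty: "A \<in> EM P // nrel P \<Longrightarrow> \<exists>s. s \<in> A"
  by (erule quotientE) (use equiv_class_self[OF equiv_nrel] in blast)

lemma rep_in: "A \<in> EM P // nrel P \<Longrightarrow> rep A \<in> A"
  unfolding rep_def using quot_nonempty by (rule someI_ex)

lemma rep_EM: "A \<in> EM P // nrel P \<Longrightarrow> rep A \<in> EM P"
  using rep_in quot_cls by blast

lemma rep_cls: "A \<in> EM P // nrel P \<Longrightarrow> A = cls P (rep A)"
  using rep_in quot_cls by blast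

lemma rep_cls_neg: "r \<in> EM P \<Longrightarrow> negligible (\<lambda>x. r x - rep (cls P r) x)"
  using rep_in[OF cls_in, of r P] mem_cls by blast

lemma same_cls_neg: "A \<in> EM P // nrel P \<Longrightarrow> s \<in> A \<Longrightarrow> t \<in> A \<Longrightarrow> negligible (\<lambda>x. s x - t x)"
  by (metis cls_eq_iff quot_cls)

lemma carrier_gen: "carrier (gen_ring P) = EM P // nrel P" by (simp add: gen_ring_def)
lemma zero_gen: "\<zero>\<^bsub>gen_ring P\<^esub> = cls P (\<lambda>_. 0)" by (simp add: gen_ring_def)
lemma one_gen: "\<one>\<^bsub>gen_ring P\<^esub> = cls P (\<lambda>_. 1)" by (simp add: gen_ring_def)
lemma add_gen: "A \<oplus>\<^bsub>gen_ring P\<^esub> B = cls P (\<lambda>x. rep A x + rep B x)" by (simp add: gen_ring_def)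
lemma mult_gen: "A \<otimes>\<^bsub>gen_ring P\<^esub> B = cls P (\<lambda>x. rep A x * rep B x)" by (simp add: gen_ring_def)

lemma add_gen_rep:
  assumes "adm P" "A \<in> EM P // nrel P" "B \<in> EM P // nrel P" "r \<in> A" "s \<in> B"
  shows "A \<oplus>\<^bsub>gen_ring P\<^esub> B = cls P (\<lambda>x. r x + s x)"
  unfolding add_gen
proof (rule cls_eq)
  have r: "r \<in> EM P" and s: "s \<in> EM P" using assms quot_cls by blast+
  show "(\<lambda>x. rep A x + rep B x) \<in> EM P" using assms by (intro EM_add rep_EM)
  show "(\<lambda>x. r x + s x) \<in> EM P" using assms r s by (intro EM_add)
  have "negligible (\<lambda>x. (rep A x - r x) + (rep B x - s x))"
    using same_cls_neg[OF assms(2) rep_in[OF assms(2)] assms(4)]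
      same_cls_neg[OF assms(3) rep_in[OF assms(3)] assms(5)] by (rule neg_add)
  then show "negligible (\<lambda>x. (rep A x + rep B x) - (r x + s x))" by (simp add: algebra_simps)
qed

lemma mult_gen_rep:
  assumes "adm P" "A \<in> EM P // nrel P" "B \<in> EM P // nrel P" "r \<in> A" "s \<in> B"
  shows "A \<otimes>\<^bsub>gen_ring P\<^esub> B = cls P (\<lambda>x. r x * s x)"
  unfolding mult_gen
proof (rule cls_eq)
  have r: "r \<in> EM P" and s: "s \<in> EM P" using assms quot_cls by blast+
  show "(\<lambda>x. rep A x * rep B x) \<in> EM P" using assms by (intro EM_mult rep_EM)
  show "(\<lambda>x. r x * s x) \<in> EM P" using assms r s by (intro EM_mult)
  have "negligible (\<lambda>x. (rep A x - r x) * rep B x + (rep B x - s x) * r x)"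
    using r rep_EM[OF assms(3)]
    by (intro neg_add neg_mult same_cls_neg[OF assms(2) rep_in[OF assms(2)] assms(4)]
      same_cls_neg[OF assms(3) rep_in[OF assms(3)] assms(5)]) (auto simp: EM_def)
  then show "negligible (\<lambda>x. (rep A x * rep B x) - (r x * s x))" by (simp add: algebra_simps)
qed

lemma cring_gen:
  assumes P: "adm P" shows "cring (gen_ring P)"
proof -
  let ?R = "gen_ring P"
  note C = carrier_gen[of P]
  have cl: "cls P r \<in> carrier ?R" if "r \<in> EM P" for r using that by (simp add: C cls_in)
  have ri: "rep A \<in> A" if "A \<in> carrier ?R" for A using that by (simp add: C rep_in)
  have rE: "rep A \<in> EM P" if "A \<in> carrier ?R" for A using that by (simp add: C rep_EM)
  have in_cls: "r \<in> cls P r" if "r \<in> EM P" for r using that self_in_cls by blast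
  have eq: "A = cls P (rep A)" if "A \<in> carrier ?R" for A using that by (simp add: C rep_cls)
  have addr: "A \<oplus>\<^bsub>?R\<^esub> B = cls P (\<lambda>x. r x + s x)" if "A \<in> carrier ?R" "B \<in> carrier ?R" "r \<in> A" "s \<in> B" for A B r s
    using add_gen_rep[OF P] that C by simp
  have multr: "A \<otimes>\<^bsub>?R\<^esub> B = cls P (\<lambda>x. r x * s x)" if "A \<in> carrier ?R" "B \<in> carrier ?R" "r \<in> A" "s \<in> B" for A B r s
    using mult_gen_rep[OF P] that C by simp
  have add_cl: "A \<oplus>\<^bsub>?R\<^esub> B \<in> carrier ?R" if "A \<in> carrier ?R" "B \<in> carrier ?R" for A B
    using that by (simp add: add_gen cl EM_add P rE)
  have mult_cl: "A \<otimes>\<^bsub>?R\<^esub> B \<in> carrier ?R" if "A \<in> carrier ?R" "B \<in> carrier ?R" for A B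
    using that by (simp add: mult_gen cl EM_mult P rE)
  have z: "\<zero>\<^bsub>?R\<^esub> \<in> carrier ?R" by (simp add: zero_gen cl EM_const P)
  have o: "\<one>\<^bsub>?R\<^esub> \<in> carrier ?R" by (simp add: one_gen cl EM_const P)
  have EC: "(\<lambda>_. c) \<in> EM P" for c using EM_const[OF P] .
  show ?thesis
  proof (rule cringI)
    show "abelian_group ?R"
    proof (rule abelian_groupI)
      fix A B C assume AB: "A \<in> carrier ?R" "B \<in> carrier ?R" "C \<in> carrier ?R"
      have s1: "A \<oplus>\<^bsub>?R\<^esub> B = cls P (\<lambda>x. rep A x + rep B x)" using AB by (intro addr ri)
      have s2: "B \<oplus>\<^bsub>?R\<^esub> C = cls P (\<lambda>x. rep B x + rep C x)" using AB by (intro addr ri)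
      have "(A \<oplus>\<^bsub>?R\<^esub> B) \<oplus>\<^bsub>?R\<^esub> C = cls P (\<lambda>x. (rep A x + rep B x) + rep C x)"
        using AB by (intro addr add_cl ri) (auto simp: s1 intro!: in_cls EM_add P rE)
      moreover have "A \<oplus>\<^bsub>?R\<^esub> (B \<oplus>\<^bsub>?R\<^esub> C) = cls P (\<lambda>x. rep A x + (rep B x + rep C x))"
        using AB by (intro addr add_cl ri) (auto simp: s2 intro!: in_cls EM_add P rE)
      ultimately show "(A \<oplus>\<^bsub>?R\<^esub> B) \<oplus>\<^bsub>?R\<^esub> C = A \<oplus>\<^bsub>?R\<^esub> (B \<oplus>\<^bsub>?R\<^esub> C)"
        by (simp add: add.assoc)
    next
      fix A B assume AB: "A \<in> carrier ?R" "B \<in> carrier ?R"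
      show "A \<oplus>\<^bsub>?R\<^esub> B \<in> carrier ?R" using AB add_cl by blast
      show "A \<oplus>\<^bsub>?R\<^esub> B = B \<oplus>\<^bsub>?R\<^esub> A" by (simp add: add_gen add.commute)
    next
      show "\<zero>\<^bsub>?R\<^esub> \<in> carrier ?R" by (rule z)
    next
      fix A assume A: "A \<in> carrier ?R"
      have "\<zero>\<^bsub>?R\<^esub> \<oplus>\<^bsub>?R\<^esub> A = cls P (\<lambda>x. 0 + rep A x)"
        using A z by (intro addr ri) (auto simp: zero_gen intro!: in_cls EC)
      then show "\<zero>\<^bsub>?R\<^esub> \<oplus>\<^bsub>?R\<^esub> A = A" using eq[OF A] by simp
      have "cls P (\<lambda>x. - rep A x) \<oplus>\<^bsub>?R\<^esub> A = cls P (\<lambda>x. - rep A x + rep A x)"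
        using A by (intro addr ri cl EM_uminus P rE in_cls)
      also have "\<dots> = \<zero>\<^bsub>?R\<^esub>" by (simp add: zero_gen)
      finally show "\<exists>y\<in>carrier ?R. y \<oplus>\<^bsub>?R\<^esub> A = \<zero>\<^bsub>?R\<^esub>"
        using A by (intro bexI[of _ "cls P (\<lambda>x. - rep A x)"] cl EM_uminus P rE)
    qed
  next
    show "comm_monoid ?R"
    proof (rule comm_monoidI)
      fix A B C assume AB: "A \<in> carrier ?R" "B \<in> carrier ?R" "C \<in> carrier ?R"
      have s1: "A \<otimes>\<^bsub>?R\<^esub> B = cls P (\<lambda>x. rep A x * rep B x)" using AB by (intro multr ri)
      have s2: "B \<otimes>\<^bsub>?R\<^esub> C = cls P (\<lambda>x. rep B x * rep C x)" using AB by (intro multr ri)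
      have "(A \<otimes>\<^bsub>?R\<^esub> B) \<otimes>\<^bsub>?R\<^esub> C = cls P (\<lambda>x. (rep A x * rep B x) * rep C x)"
        using AB by (intro multr mult_cl ri) (auto simp: s1 intro!: in_cls EM_mult P rE)
      moreover have "A \<otimes>\<^bsub>?R\<^esub> (B \<otimes>\<^bsub>?R\<^esub> C) = cls P (\<lambda>x. rep A x * (rep B x * rep C x))"
        using AB by (intro multr mult_cl ri) (auto simp: s2 intro!: in_cls EM_mult P rE)
      ultimately show "(A \<otimes>\<^bsub>?R\<^esub> B) \<otimes>\<^bsub>?R\<^esub> C = A \<otimes>\<^bsub>?R\<^esub> (B \<otimes>\<^bsub>?R\<^esub> C)"
        by (simp add: mult.assoc)
    next
      fix A B assume AB: "A \<in> carrier ?R" "B \<in> carrier ?R"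
      show "A \<otimes>\<^bsub>?R\<^esub> B \<in> carrier ?R" using AB mult_cl by blast
      show "A \<otimes>\<^bsub>?R\<^esub> B = B \<otimes>\<^bsub>?R\<^esub> A" by (simp add: mult_gen mult.commute)
    next
      show "\<one>\<^bsub>?R\<^esub> \<in> carrier ?R" by (rule o)
    next
      fix A assume A: "A \<in> carrier ?R"
      have "\<one>\<^bsub>?R\<^esub> \<otimes>\<^bsub>?R\<^esub> A = cls P (\<lambda>x. 1 * rep A x)"
        using A o by (intro multr ri) (auto simp: one_gen intro!: in_cls EC)
      then show "\<one>\<^bsub>?R\<^esub> \<otimes>\<^bsub>?R\<^esub> A = A" using eq[OF A] by simp
    qed
  next
    fix A B C assume AB: "A \<in> carrier ?R" "B \<in> carrier ?R" "C \<in> carrier ?R"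
    have s1: "A \<oplus>\<^bsub>?R\<^esub> B = cls P (\<lambda>x. rep A x + rep B x)" using AB by (intro addr ri)
    have s2: "A \<otimes>\<^bsub>?R\<^esub> C = cls P (\<lambda>x. rep A x * rep C x)" using AB by (intro multr ri)
    have s3: "B \<otimes>\<^bsub>?R\<^esub> C = cls P (\<lambda>x. rep B x * rep C x)" using AB by (intro multr ri)
    have "(A \<oplus>\<^bsub>?R\<^esub> B) \<otimes>\<^bsub>?R\<^esub> C = cls P (\<lambda>x. (rep A x + rep B x) * rep C x)"
      using AB by (intro multr add_cl ri) (auto simp: s1 intro!: in_cls EM_add P rE)
    moreover have "A \<otimes>\<^bsub>?R\<^esub> C \<oplus>\<^bsub>?R\<^esub> B \<otimes>\<^bsub>?R\<^esub> C = cls P (\<lambda>x. rep A x * rep C x + rep B x * rep C x)"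
      using AB by (intro addr mult_cl ri) (auto simp: s2 s3 intro!: in_cls EM_mult P rE)
    ultimately show "(A \<oplus>\<^bsub>?R\<^esub> B) \<otimes>\<^bsub>?R\<^esub> C = A \<otimes>\<^bsub>?R\<^esub> C \<oplus>\<^bsub>?R\<^esub> B \<otimes>\<^bsub>?R\<^esub> C"
      by (simp add: distrib_right)
  qed
qed


lemma in_cls_of:
  assumes "A \<in> EM P // nrel P" "t \<in> A" "u \<in> EM P" "negligible (\<lambda>x. t x - u x)"
  shows "u \<in> A"
  using quot_cls[OF assms(1,2)] assms(3,4) mem_cls by blast

lemma pow_gen:
  assumes P: "adm P" and A: "A \<in> EM P // nrel P"
  shows "A [^]\<^bsub>gen_ring P\<^esub> (n::nat) = cls P (\<lambda>x. rep A x ^ n)"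
proof (induction n)
  case 0 show ?case by (simp add: one_gen)
next
  case (Suc n)
  have E: "(\<lambda>x. rep A x ^ n) \<in> EM P"
  proof (induction n)
    case 0 show ?case using EM_const[OF P] by simp
  next
    case (Suc n)
    show ?case using EM_mult[OF P Suc rep_EM[OF A]] by (simp add: mult.commute)
  qed
  have "A [^]\<^bsub>gen_ring P\<^esub> Suc n = cls P (\<lambda>x. rep A x ^ n) \<otimes>\<^bsub>gen_ring P\<^esub> A"
    using Suc by simp
  also have "\<dots> = cls P (\<lambda>x. rep A x ^ n * rep A x)"
    by (rule mult_gen_rep[OF P cls_in[OF E] A self_in_cls[OF E] rep_in[OF A]])
  finally show ?case by (simp only: power_Suc2)
qed

lemma reduced_gen:
  assumes P: "adm P" shows "reduced_ring (gen_ring P)"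
  unfolding reduced_ring_def
proof (intro ballI allI impI)
  interpret R: cring "gen_ring P" by (rule cring_gen[OF P])
  fix A n assume A: "A \<in> carrier (gen_ring P)" and H: "A [^]\<^bsub>gen_ring P\<^esub> (n::nat) = \<zero>\<^bsub>gen_ring P\<^esub>"
  have AQ: "A \<in> EM P // nrel P" using A by (simp add: carrier_gen)
  show "A = \<zero>\<^bsub>gen_ring P\<^esub>"
  proof (cases n)
    case 0
    then have "\<one>\<^bsub>gen_ring P\<^esub> = \<zero>\<^bsub>gen_ring P\<^esub>" using H by simp
    then have "A = A \<otimes>\<^bsub>gen_ring P\<^esub> \<zero>\<^bsub>gen_ring P\<^esub>" using A by (metis R.r_one)
    then show ?thesis using A by simp
  next
    case (Suc k)
    have E: "(\<lambda>x. rep A x ^ n) \<in> EM P"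
    proof (induction n)
      case 0 show ?case using EM_const[OF P] by simp
    next
      case (Suc n)
      show ?case using EM_mult[OF P Suc rep_EM[OF AQ]] by (simp add: mult.commute)
    qed
    have "cls P (\<lambda>x. rep A x ^ n) = cls P (\<lambda>_. 0)" using H pow_gen[OF P AQ] zero_gen by metis
    then have "negligible (\<lambda>x. rep A x ^ n - 0)" using cls_eq_iff E EM_const[OF P] by blast
    then have "negligible (\<lambda>x. rep A x ^ Suc k)" using Suc by simp
    then have "negligible (rep A)" by (rule neg_pow)
    then have "cls P (rep A) = cls P (\<lambda>_. 0)"
      using rep_EM[OF AQ] EM_const[OF P] by (intro cls_eq) auto
    then show ?thesis using rep_cls[OF AQ] zero_gen by metis
  qed
qed

definition dl :: "real \<Rightarrow> real" where "dl x = exp (- inverse x)"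
definition chi :: "(real \<Rightarrow> real) \<Rightarrow> (real \<Rightarrow> real) \<Rightarrow> real \<Rightarrow> real" where
  "chi r s x = (s x ^ 2 + dl x) / (r x ^ 2 + s x ^ 2 + 2 * dl x)"

lemma dl_pos: "dl x > 0" by (simp add: dl_def)

lemma den_pos: "r x ^ 2 + s x ^ 2 + 2 * dl x > 0"
  using dl_pos[of x] by (intro add_nonneg_pos) auto

lemma chi_bounds: "0 \<le> chi r s x" "chi r s x \<le> 1"
proof -
  have d: "dl x > 0" by (rule dl_pos)
  show "0 \<le> chi r s x" unfolding chi_def using den_pos[of r x s] d
    by (intro divide_nonneg_pos) auto
  show "chi r s x \<le> 1" unfolding chi_def using den_pos[of r x s] d
    by (subst divide_le_eq_1_pos) auto
qed

lemma chi_sum: "chi r s x + chi s r x = 1"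
proof -
  have e: "s x ^ 2 + r x ^ 2 + 2 * dl x = r x ^ 2 + s x ^ 2 + 2 * dl x" by simp
  show ?thesis unfolding chi_def e using den_pos[of r x s]
    by (simp add: add_divide_distrib[symmetric])
qed

lemma key_bound:
  fixes a b d :: real assumes d: "d > 0"
  shows "\<bar>a * ((b^2 + d) / (a^2 + b^2 + 2 * d))\<bar> \<le> sqrt \<bar>a * b\<bar> + sqrt d"
proof -
  define D where "D = a^2 + b^2 + 2 * d"
  have D: "D > 0" using d by (simp add: D_def add_nonneg_pos)
  have s1: "\<bar>a\<bar> * b^2 \<le> sqrt \<bar>a * b\<bar> * D"
  proof (cases "\<bar>a\<bar> \<le> \<bar>b\<bar>")
    case True
    have "\<bar>a\<bar> * \<bar>a\<bar> \<le> \<bar>a\<bar> * \<bar>b\<bar>" using True by (intro mult_left_mono) auto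
    then have "a^2 \<le> \<bar>a * b\<bar>" by (simp add: power2_eq_square abs_mult abs_mult_self_eq)
    then have "sqrt (a^2) \<le> sqrt \<bar>a * b\<bar>" by (rule real_sqrt_le_mono)
    then have "\<bar>a\<bar> \<le> sqrt \<bar>a * b\<bar>" by simp
    moreover have "b^2 \<le> D" using d by (simp add: D_def)
    ultimately show ?thesis by (intro mult_mono) auto
  next
    case False
    have "\<bar>b\<bar> * \<bar>b\<bar> \<le> \<bar>a\<bar> * \<bar>b\<bar>" using False by (intro mult_right_mono) auto
    then have "b^2 \<le> \<bar>a * b\<bar>" by (simp add: power2_eq_square abs_mult abs_mult_self_eq)
    then have "sqrt (b^2) \<le> sqrt \<bar>a * b\<bar>" by (rule real_sqrt_le_mono)
    then have bb: "\<bar>b\<bar> \<le> sqrt \<bar>a * b\<bar>" by simp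
    have "\<bar>a\<bar> * b^2 = \<bar>b\<bar> * (\<bar>a\<bar> * \<bar>b\<bar>)" by (simp add: power2_eq_square abs_mult)
    also have "\<dots> \<le> \<bar>b\<bar> * (\<bar>a\<bar> * \<bar>a\<bar>)" using False by (intro mult_left_mono) auto
    also have "\<dots> = \<bar>b\<bar> * a^2" by (simp add: power2_eq_square abs_mult_self_eq)
    also have "\<dots> \<le> sqrt \<bar>a * b\<bar> * D" using bb d by (intro mult_mono) (auto simp: D_def)
    finally show ?thesis .
  qed
  have s2: "\<bar>a\<bar> * d \<le> sqrt d * D"
  proof -
    have sd: "sqrt d ^ 2 = d" using d by simp
    have "0 \<le> (\<bar>a\<bar> - sqrt d)^2" by simp
    also have "\<dots> = a^2 + d - 2 * \<bar>a\<bar> * sqrt d" by (simp only: power2_diff power2_abs sd)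
    finally have "2 * \<bar>a\<bar> * sqrt d \<le> a^2 + d" by simp
    moreover have "0 \<le> \<bar>a\<bar> * sqrt d" "0 \<le> b^2" using d by auto
    ultimately have "\<bar>a\<bar> * sqrt d \<le> D" using d unfolding D_def by linarith
    then have m: "\<bar>a\<bar> * sqrt d * sqrt d \<le> D * sqrt d" using d by (intro mult_right_mono) auto
    have e: "\<bar>a\<bar> * sqrt d * sqrt d = \<bar>a\<bar> * d" using d by (simp add: mult.assoc)
    show ?thesis using m unfolding e by (simp add: mult.commute)
  qed
  have nn: "(b^2 + d) / D \<ge> 0" using D d by (intro divide_nonneg_pos) auto
  have "\<bar>a * ((b^2 + d) / D)\<bar> = \<bar>a\<bar> * ((b^2 + d) / D)" using nn by (simp only: abs_mult abs_of_nonneg)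
  also have "\<dots> = (\<bar>a\<bar> * b^2 + \<bar>a\<bar> * d) / D" by (simp add: distrib_left)
  also have "\<dots> \<le> (sqrt \<bar>a * b\<bar> * D + sqrt d * D) / D"
    using s1 s2 D by (intro divide_right_mono) auto
  also have "\<dots> = sqrt \<bar>a * b\<bar> + sqrt d" using D by (simp add: distrib_right[symmetric])
  finally show ?thesis by (simp add: D_def)
qed

lemma neg_sqrt_dl: "negligible (\<lambda>x. sqrt (dl x))"
  using neg_sqrt[OF neg_expinv] dl_pos by (simp add: dl_def)

lemma neg_chi:
  assumes "negligible (\<lambda>x. r x * s x)"
  shows "negligible (\<lambda>x. r x * chi r s x)"
proof (rule neg_le)
  show "negligible (\<lambda>x. sqrt \<bar>r x * s x\<bar> + sqrt (dl x))"
    by (intro neg_add neg_sqrt assms neg_sqrt_dl)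
  show "\<forall>\<^sub>F x in at_right 0. \<bar>r x * chi r s x\<bar> \<le> \<bar>sqrt \<bar>r x * s x\<bar> + sqrt (dl x)\<bar>"
  proof (rule always_eventually, rule allI)
    fix x
    have h: "\<bar>r x * chi r s x\<bar> \<le> sqrt \<bar>r x * s x\<bar> + sqrt (dl x)"
      using key_bound[OF dl_pos, of "r x" "s x" x] unfolding chi_def .
    then show "\<bar>r x * chi r s x\<bar> \<le> \<bar>sqrt \<bar>r x * s x\<bar> + sqrt (dl x)\<bar>" by linarith
  qed
qed

lemma normal_gen:
  assumes P: "adm P" and Pchi: "\<And>r s. P r \<Longrightarrow> P s \<Longrightarrow> P (chi r s)"
  shows "normal_ring (gen_ring P)"
  unfolding normal_ring_def
proof (intro ballI impI)
  interpret R: cring "gen_ring P" by (rule cring_gen[OF P])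
  fix A B assume A: "A \<in> carrier (gen_ring P)" and B: "B \<in> carrier (gen_ring P)"
    and AB: "A \<otimes>\<^bsub>gen_ring P\<^esub> B = \<zero>\<^bsub>gen_ring P\<^esub>"
  have AQ: "A \<in> EM P // nrel P" and BQ: "B \<in> EM P // nrel P" using A B by (simp_all add: carrier_gen)
  define a where "a = rep A"
  define b where "b = rep B"
  have aE: "a \<in> EM P" and bE: "b \<in> EM P" using rep_EM AQ BQ by (auto simp: a_def b_def)
  have abE: "(\<lambda>x. a x * b x) \<in> EM P" using EM_mult[OF P aE bE] .
  have "cls P (\<lambda>x. a x * b x) = cls P (\<lambda>_. 0)" using AB by (simp add: mult_gen zero_gen a_def b_def)
  then have "negligible (\<lambda>x. a x * b x - 0)" using cls_eq_iff abE EM_const[OF P] by blast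
  then have nab: "negligible (\<lambda>x. a x * b x)" by simp
  then have nba: "negligible (\<lambda>x. b x * a x)" by (simp add: mult.commute)
  have chiE: "chi a b \<in> EM P" "chi b a \<in> EM P"
    using aE bE Pchi chi_bounds by (auto simp: EM_def intro!: mod_le[OF mod_const[of 1]])
  show "carrier (gen_ring P) = {x \<oplus>\<^bsub>gen_ring P\<^esub> y |x y. x \<in> Ann (gen_ring P) A \<and> y \<in> Ann (gen_ring P) B}"
  proof (intro equalityI subsetI)
    fix T assume T: "T \<in> carrier (gen_ring P)"
    have TQ: "T \<in> EM P // nrel P" using T by (simp add: carrier_gen)
    define t where "t = rep T"
    have tE: "t \<in> EM P" using rep_EM TQ by (auto simp: t_def)
    define u where "u = (\<lambda>x. t x * chi a b x)"
    define v where "v = (\<lambda>x. t x * chi b a x)"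
    have uE: "u \<in> EM P" unfolding u_def by (rule EM_mult[OF P tE chiE(1)])
    have vE: "v \<in> EM P" unfolding v_def by (rule EM_mult[OF P tE chiE(2)])
    have U: "cls P u \<in> carrier (gen_ring P)" "cls P v \<in> carrier (gen_ring P)"
      using uE vE by (auto simp: carrier_gen cls_in)
    have "A \<otimes>\<^bsub>gen_ring P\<^esub> cls P u = cls P (\<lambda>x. a x * u x)"
      using AQ uE unfolding a_def by (intro mult_gen_rep[OF P] rep_in cls_in self_in_cls) auto
    also have "\<dots> = cls P (\<lambda>_. 0)"
    proof (rule cls_eq)
      show "(\<lambda>x. a x * u x) \<in> EM P" by (rule EM_mult[OF P aE uE])
      show "(\<lambda>_. 0) \<in> EM P" by (rule EM_const[OF P])
      have "negligible (\<lambda>x. (a x * chi a b x) * t x)"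
        using neg_mult[OF neg_chi[OF nab], of t] tE by (auto simp: EM_def)
      then show "negligible (\<lambda>x. a x * u x - 0)" by (simp add: u_def mult_ac)
    qed
    finally have ua: "cls P u \<in> Ann (gen_ring P) A" using U by (simp add: Ann_def zero_gen)
    have "B \<otimes>\<^bsub>gen_ring P\<^esub> cls P v = cls P (\<lambda>x. b x * v x)"
      using BQ vE unfolding b_def by (intro mult_gen_rep[OF P] rep_in cls_in self_in_cls) auto
    also have "\<dots> = cls P (\<lambda>_. 0)"
    proof (rule cls_eq)
      show "(\<lambda>x. b x * v x) \<in> EM P" by (rule EM_mult[OF P bE vE])
      show "(\<lambda>_. 0) \<in> EM P" by (rule EM_const[OF P])
      have "negligible (\<lambda>x. (b x * chi b a x) * t x)"
        using neg_mult[OF neg_chi[OF nba], of t] tE by (auto simp: EM_def)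
      then show "negligible (\<lambda>x. b x * v x - 0)" by (simp add: v_def mult_ac)
    qed
    finally have vb: "cls P v \<in> Ann (gen_ring P) B" using U by (simp add: Ann_def zero_gen)
    have "cls P u \<oplus>\<^bsub>gen_ring P\<^esub> cls P v = cls P (\<lambda>x. u x + v x)"
      using uE vE by (intro add_gen_rep[OF P] cls_in self_in_cls)
    also have "(\<lambda>x. u x + v x) = t"
      by (rule ext) (simp add: u_def v_def distrib_left[symmetric] chi_sum)
    also have "cls P t = T" using rep_cls[OF TQ] by (simp add: t_def)
    finally show "T \<in> {x \<oplus>\<^bsub>gen_ring P\<^esub> y |x y. x \<in> Ann (gen_ring P) A \<and> y \<in> Ann (gen_ring P) B}"
      using ua vb by blast
  next
    fix T assume "T \<in> {x \<oplus>\<^bsub>gen_ring P\<^esub> y |x y. x \<in> Ann (gen_ring P) A \<and> y \<in> Ann (gen_ring P) B}"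
    then show "T \<in> carrier (gen_ring P)" by (auto simp: Ann_def)
  qed
qed


section \<open>Lattice structure, generically\<close>

definition soft_abs :: "((real \<Rightarrow> real) \<Rightarrow> bool) \<Rightarrow> (real \<Rightarrow> real) \<Rightarrow> bool" where
  "soft_abs P d0 \<longleftrightarrow> P d0 \<and> negligible d0 \<and> (\<forall>x\<in>I. 0 \<le> d0 x) \<and>
     (\<forall>f. P f \<longrightarrow> (\<exists>g. P g \<and> (\<forall>x\<in>I. \<bar>f x\<bar> \<le> g x \<and> g x \<le> \<bar>f x\<bar> + d0 x)))"

definition meet_ok where
  "meet_ok P d0 mt \<longleftrightarrow> (\<forall>A\<in>EM P // nrel P. \<forall>B\<in>EM P // nrel P. \<exists>u\<in>EM P. mt A B = cls P u \<and>
     (\<forall>x\<in>I. min (rep A x) (rep B x) - d0 x \<le> u x \<and> u x \<le> min (rep A x) (rep B x)))"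

definition join_ok where
  "join_ok P d0 jn \<longleftrightarrow> (\<forall>A\<in>EM P // nrel P. \<forall>B\<in>EM P // nrel P. \<exists>u\<in>EM P. jn A B = cls P u \<and>
     (\<forall>x\<in>I. max (rep A x) (rep B x) \<le> u x \<and> u x \<le> max (rep A x) (rep B x) + d0 x))"

lemma gen_leI: "r \<in> A \<Longrightarrow> s \<in> B \<Longrightarrow> (\<forall>x\<in>I. r x \<le> s x) \<Longrightarrow> gen_le P A B"
  unfolding gen_le_def by blast

lemma neg_le_I: "negligible h \<Longrightarrow> (\<forall>x\<in>I. \<bar>f x\<bar> \<le> \<bar>h x\<bar>) \<Longrightarrow> negligible f"
  by (erule neg_le) (use ev_I in \<open>auto elim: eventually_mono\<close>)

lemma neg_abs: "negligible f \<Longrightarrow> negligible (\<lambda>x. \<bar>f x\<bar>)"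
  by (erule neg_le) auto

lemma majorant:
  assumes P: "adm P" and S: "soft_abs P d0" and f: "f \<in> EM P" "negligible f"
  shows "\<exists>g\<in>EM P. negligible g \<and> (\<forall>x\<in>I. \<bar>f x\<bar> \<le> g x)"
proof -
  obtain g where g: "P g" "\<forall>x\<in>I. \<bar>f x\<bar> \<le> g x \<and> g x \<le> \<bar>f x\<bar> + d0 x"
    using S f unfolding soft_abs_def EM_def by blast
  have d0: "negligible d0" "\<forall>x\<in>I. 0 \<le> d0 x" using S unfolding soft_abs_def by auto
  have "negligible (\<lambda>x. \<bar>f x\<bar> + d0 x)" by (intro neg_add neg_abs f d0)
  then have ng: "negligible g"
  proof (rule neg_le_I)
    show "\<forall>x\<in>I. \<bar>g x\<bar> \<le> \<bar>\<bar>f x\<bar> + d0 x\<bar>" using g d0 by force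
  qed
  show ?thesis using g ng neg_mod[OF ng] by (auto simp: EM_def)
qed

context
  fixes P :: "(real \<Rightarrow> real) \<Rightarrow> bool" and d0 :: "real \<Rightarrow> real"
  assumes P: "adm P" and S: "soft_abs P d0"
begin

lemma d0_props: "d0 \<in> EM P" "negligible d0" "\<forall>x\<in>I. 0 \<le> d0 x"
  using S neg_mod unfolding soft_abs_def EM_def by auto

lemma le_antisym_gen:
  assumes A: "A \<in> EM P // nrel P" and B: "B \<in> EM P // nrel P"
    and AB: "gen_le P A B" and BA: "gen_le P B A"
  shows "A = B"
proof -
  obtain r s where rs: "r \<in> A" "s \<in> B" "\<forall>x\<in>I. r x \<le> s x" using AB unfolding gen_le_def by blast
  obtain r' s' where rs': "s' \<in> B" "r' \<in> A" "\<forall>x\<in>I. s' x \<le> r' x" using BA unfolding gen_le_def by blast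
  have h: "negligible (\<lambda>x. (s x - s' x) + (r' x - r x))"
    by (intro neg_add same_cls_neg[OF B] same_cls_neg[OF A] rs rs')
  have "negligible (\<lambda>x. r x - s x)"
  proof (rule neg_le_I[OF h], intro ballI)
    fix x assume "x \<in> I"
    then have "r x \<le> s x" "s' x \<le> r' x" using rs(3) rs'(3) by auto
    then show "\<bar>r x - s x\<bar> \<le> \<bar>(s x - s' x) + (r' x - r x)\<bar>" by linarith
  qed
  then show ?thesis using quot_cls[OF A rs(1)] quot_cls[OF B rs(2)] cls_eq by metis
qed

lemma le_trans_gen:
  assumes A: "A \<in> EM P // nrel P" and B: "B \<in> EM P // nrel P" and C: "C \<in> EM P // nrel P"
    and AB: "gen_le P A B" and BC: "gen_le P B C"
  shows "gen_le P A C"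
proof -
  obtain r s where rs: "r \<in> A" "s \<in> B" "\<forall>x\<in>I. r x \<le> s x" using AB unfolding gen_le_def by blast
  obtain s' t where st: "s' \<in> B" "t \<in> C" "\<forall>x\<in>I. s' x \<le> t x" using BC unfolding gen_le_def by blast
  have sE: "s \<in> EM P" "s' \<in> EM P" using quot_cls[OF B] rs st by auto
  have tE: "t \<in> EM P" using quot_cls[OF C] st by auto
  obtain g where g: "g \<in> EM P" "negligible g" "\<forall>x\<in>I. \<bar>s x - s' x\<bar> \<le> g x"
    using majorant[OF P S EM_diff[OF P sE] same_cls_neg[OF B rs(2) st(1)]] by blast
  have "(\<lambda>x. t x + g x) \<in> C"
    by (rule in_cls_of[OF C st(2) EM_add[OF P tE g(1)]]) (use neg_uminus[OF g(2)] in simp)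
  moreover have "\<forall>x\<in>I. r x \<le> t x + g x"
  proof
    fix x assume x: "x \<in> I"
    have "r x \<le> s x" "s' x \<le> t x" "\<bar>s x - s' x\<bar> \<le> g x" using rs(3) st(3) g(3) x by auto
    then show "r x \<le> t x + g x" by linarith
  qed
  ultimately show ?thesis using rs(1) by (intro gen_leI)
qed

lemma le_add_gen:
  assumes A: "A \<in> EM P // nrel P" and B: "B \<in> EM P // nrel P" and Z: "Z \<in> EM P // nrel P"
    and AB: "gen_le P A B"
  shows "gen_le P (A \<oplus>\<^bsub>gen_ring P\<^esub> Z) (B \<oplus>\<^bsub>gen_ring P\<^esub> Z)"
proof -
  obtain r s where rs: "r \<in> A" "s \<in> B" "\<forall>x\<in>I. r x \<le> s x" using AB unfolding gen_le_def by blast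
  have rE: "r \<in> EM P" "s \<in> EM P" using quot_cls A B rs by blast+
  have zE: "rep Z \<in> EM P" using rep_EM[OF Z] .
  have 1: "A \<oplus>\<^bsub>gen_ring P\<^esub> Z = cls P (\<lambda>x. r x + rep Z x)"
    by (rule add_gen_rep[OF P A Z rs(1) rep_in[OF Z]])
  have 2: "B \<oplus>\<^bsub>gen_ring P\<^esub> Z = cls P (\<lambda>x. s x + rep Z x)"
    by (rule add_gen_rep[OF P B Z rs(2) rep_in[OF Z]])
  have "\<forall>x\<in>I. r x + rep Z x \<le> s x + rep Z x" using rs(3) by auto
  then show ?thesis unfolding 1 2
    using self_in_cls[OF EM_add[OF P rE(1) zE]] self_in_cls[OF EM_add[OF P rE(2) zE]] by (intro gen_leI)
qed

lemma nonneg_rep: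
  assumes A: "A \<in> EM P // nrel P" and H: "gen_le P (cls P (\<lambda>_. 0)) A"
  shows "\<exists>a\<in>A. \<forall>x\<in>I. 0 \<le> a x"
proof -
  obtain z0 a where oa: "z0 \<in> cls P (\<lambda>_. 0)" "a \<in> A" "\<forall>x\<in>I. z0 x \<le> a x" using H unfolding gen_le_def by blast
  have oo: "(\<lambda>_. 0) \<in> EM P \<and> z0 \<in> EM P \<and> negligible (\<lambda>x. (\<lambda>_. 0) x - z0 x)"
    using oa(1) unfolding mem_cls .
  then have oE: "z0 \<in> EM P" and on: "negligible (\<lambda>x. 0 - z0 x)" by (simp_all only:)
  have on': "negligible z0" using neg_uminus[OF on] by simp
  have aE: "a \<in> EM P" using quot_cls[OF A oa(2)] by simp
  obtain g where g: "g \<in> EM P" "negligible g" "\<forall>x\<in>I. \<bar>z0 x\<bar> \<le> g x"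
    using majorant[OF P S oE on'] by blast
  have m: "(\<lambda>x. a x + g x) \<in> A"
    by (rule in_cls_of[OF A oa(2) EM_add[OF P aE g(1)]]) (use neg_uminus[OF g(2)] in simp)
  have p: "\<forall>x\<in>I. 0 \<le> a x + g x"
  proof
    fix x assume x: "x \<in> I"
    have "z0 x \<le> a x" "\<bar>z0 x\<bar> \<le> g x" using oa(3) g(3) x by auto
    then show "0 \<le> a x + g x" by linarith
  qed
  show ?thesis using p m by (intro bexI[where x="\<lambda>x. a x + g x"])
qed

lemma le_mult_gen:
  assumes A: "A \<in> EM P // nrel P" and B: "B \<in> EM P // nrel P"
    and HA: "gen_le P (cls P (\<lambda>_. 0)) A" and HB: "gen_le P (cls P (\<lambda>_. 0)) B"
  shows "gen_le P (cls P (\<lambda>_. 0)) (A \<otimes>\<^bsub>gen_ring P\<^esub> B)"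
proof -
  obtain a where a: "a \<in> A" "\<forall>x\<in>I. 0 \<le> a x" using nonneg_rep[OF A HA] by blast
  obtain b where b: "b \<in> B" "\<forall>x\<in>I. 0 \<le> b x" using nonneg_rep[OF B HB] by blast
  have E: "a \<in> EM P" "b \<in> EM P" using quot_cls A B a b by blast+
  have 1: "A \<otimes>\<^bsub>gen_ring P\<^esub> B = cls P (\<lambda>x. a x * b x)" by (rule mult_gen_rep[OF P A B a(1) b(1)])
  have "\<forall>x\<in>I. (\<lambda>_. 0) x \<le> a x * b x" using a(2) b(2) by auto
  then show ?thesis unfolding 1
    using self_in_cls[OF EM_const[OF P, of 0]] self_in_cls[OF EM_mult[OF P E]] by (intro gen_leI)
qed

lemma min_lip: "\<bar>min a b - min a' b'\<bar> \<le> \<bar>a - a'\<bar> + \<bar>b - b'\<bar>" for a b a' b' :: real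
  by (auto simp: min_def abs_if)

lemma max_lip: "\<bar>max a b - max a' b'\<bar> \<le> \<bar>a - a'\<bar> + \<bar>b - b'\<bar>" for a b a' b' :: real
  by (auto simp: max_def abs_if)

lemma mt_props:
  assumes M: "meet_ok P d0 mt" and A: "A \<in> EM P // nrel P" and B: "B \<in> EM P // nrel P"
  obtains u where "u \<in> EM P" "mt A B = cls P u"
    "\<forall>x\<in>I. min (rep A x) (rep B x) - d0 x \<le> u x \<and> u x \<le> min (rep A x) (rep B x)"
  using M A B unfolding meet_ok_def by blast

lemma jn_props:
  assumes M: "join_ok P d0 jn" and A: "A \<in> EM P // nrel P" and B: "B \<in> EM P // nrel P"
  obtains u where "u \<in> EM P" "jn A B = cls P u"
    "\<forall>x\<in>I. max (rep A x) (rep B x) \<le> u x \<and> u x \<le> max (rep A x) (rep B x) + d0 x"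
  using M A B unfolding join_ok_def by blast

lemma meet_lemmas:
  assumes M: "meet_ok P d0 mt" and A: "A \<in> EM P // nrel P" and B: "B \<in> EM P // nrel P"
  shows "mt A B \<in> EM P // nrel P" "gen_le P (mt A B) A" "gen_le P (mt A B) B"
    "\<And>Z. Z \<in> EM P // nrel P \<Longrightarrow> gen_le P Z A \<Longrightarrow> gen_le P Z B \<Longrightarrow> gen_le P Z (mt A B)"
proof -
  obtain u where u: "u \<in> EM P" "mt A B = cls P u"
    "\<forall>x\<in>I. min (rep A x) (rep B x) - d0 x \<le> u x \<and> u x \<le> min (rep A x) (rep B x)"
    using mt_props[OF M A B] by blast
  show "mt A B \<in> EM P // nrel P" using u cls_in by simp
  show "gen_le P (mt A B) A" unfolding u(2)
    by (rule gen_leI[OF self_in_cls[OF u(1)] rep_in[OF A]]) (use u(3) in auto)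
  show "gen_le P (mt A B) B" unfolding u(2)
    by (rule gen_leI[OF self_in_cls[OF u(1)] rep_in[OF B]]) (use u(3) in auto)
  fix Z assume Z: "Z \<in> EM P // nrel P" and ZA: "gen_le P Z A" and ZB: "gen_le P Z B"
  obtain z1 a1 where za: "z1 \<in> Z" "a1 \<in> A" "\<forall>x\<in>I. z1 x \<le> a1 x" using ZA unfolding gen_le_def by blast
  obtain z2 b1 where zb: "z2 \<in> Z" "b1 \<in> B" "\<forall>x\<in>I. z2 x \<le> b1 x" using ZB unfolding gen_le_def by blast
  have E: "z1 \<in> EM P" "z2 \<in> EM P" "a1 \<in> EM P" "b1 \<in> EM P" "rep A \<in> EM P" "rep B \<in> EM P"
    using quot_cls[OF Z za(1)] quot_cls[OF Z zb(1)] quot_cls[OF A za(2)] quot_cls[OF B zb(2)]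
      rep_EM[OF A] rep_EM[OF B] by auto
  obtain g1 where g1: "g1 \<in> EM P" "negligible g1" "\<forall>x\<in>I. \<bar>a1 x - rep A x\<bar> \<le> g1 x"
    using majorant[OF P S EM_diff[OF P E(3) E(5)] same_cls_neg[OF A za(2) rep_in[OF A]]] by blast
  obtain g2 where g2: "g2 \<in> EM P" "negligible g2" "\<forall>x\<in>I. \<bar>b1 x - rep B x\<bar> \<le> g2 x"
    using majorant[OF P S EM_diff[OF P E(4) E(6)] same_cls_neg[OF B zb(2) rep_in[OF B]]] by blast
  obtain g3 where g3: "g3 \<in> EM P" "negligible g3" "\<forall>x\<in>I. \<bar>z1 x - z2 x\<bar> \<le> g3 x"
    using majorant[OF P S EM_diff[OF P E(1) E(2)] same_cls_neg[OF Z za(1) zb(1)]] by blast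
  define h where "h = (\<lambda>x. d0 x + g1 x + g2 x + g3 x)"
  have hE: "h \<in> EM P" unfolding h_def
    by (intro EM_add[OF P] d0_props g1 g2 g3)
  have hn: "negligible h" unfolding h_def by (intro neg_add d0_props g1 g2 g3)
  have m: "(\<lambda>x. z1 x - h x) \<in> Z"
    by (rule in_cls_of[OF Z za(1) EM_diff[OF P E(1) hE]]) (simp add: hn)
  have p: "\<forall>x\<in>I. z1 x - h x \<le> u x"
  proof
    fix x assume x: "x \<in> I"
    have f: "z1 x \<le> a1 x" "z2 x \<le> b1 x" "\<bar>a1 x - rep A x\<bar> \<le> g1 x" "\<bar>b1 x - rep B x\<bar> \<le> g2 x"
      "\<bar>z1 x - z2 x\<bar> \<le> g3 x" "min (rep A x) (rep B x) - d0 x \<le> u x"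
      using za zb g1 g2 g3 u(3) x by auto
    show "z1 x - h x \<le> u x" using f unfolding h_def min_def by (auto split: if_splits)
  qed
  show "gen_le P Z (mt A B)" unfolding u(2)
    by (rule gen_leI[OF m self_in_cls[OF u(1)] p])
qed

lemma join_lemmas:
  assumes M: "join_ok P d0 jn" and A: "A \<in> EM P // nrel P" and B: "B \<in> EM P // nrel P"
  shows "jn A B \<in> EM P // nrel P" "gen_le P A (jn A B)" "gen_le P B (jn A B)"
    "\<And>Z. Z \<in> EM P // nrel P \<Longrightarrow> gen_le P A Z \<Longrightarrow> gen_le P B Z \<Longrightarrow> gen_le P (jn A B) Z"
proof -
  obtain u where u: "u \<in> EM P" "jn A B = cls P u"
    "\<forall>x\<in>I. max (rep A x) (rep B x) \<le> u x \<and> u x \<le> max (rep A x) (rep B x) + d0 x"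
    using jn_props[OF M A B] by blast
  show "jn A B \<in> EM P // nrel P" using u cls_in by simp
  show "gen_le P A (jn A B)" unfolding u(2)
    by (rule gen_leI[OF rep_in[OF A] self_in_cls[OF u(1)]]) (use u(3) in auto)
  show "gen_le P B (jn A B)" unfolding u(2)
    by (rule gen_leI[OF rep_in[OF B] self_in_cls[OF u(1)]]) (use u(3) in auto)
  fix Z assume Z: "Z \<in> EM P // nrel P" and ZA: "gen_le P A Z" and ZB: "gen_le P B Z"
  obtain a1 z1 where za: "a1 \<in> A" "z1 \<in> Z" "\<forall>x\<in>I. a1 x \<le> z1 x" using ZA unfolding gen_le_def by blast
  obtain b1 z2 where zb: "b1 \<in> B" "z2 \<in> Z" "\<forall>x\<in>I. b1 x \<le> z2 x" using ZB unfolding gen_le_def by blast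
  have E: "z1 \<in> EM P" "z2 \<in> EM P" "a1 \<in> EM P" "b1 \<in> EM P" "rep A \<in> EM P" "rep B \<in> EM P"
    using quot_cls[OF Z za(2)] quot_cls[OF Z zb(2)] quot_cls[OF A za(1)] quot_cls[OF B zb(1)]
      rep_EM[OF A] rep_EM[OF B] by auto
  obtain g1 where g1: "g1 \<in> EM P" "negligible g1" "\<forall>x\<in>I. \<bar>a1 x - rep A x\<bar> \<le> g1 x"
    using majorant[OF P S EM_diff[OF P E(3) E(5)] same_cls_neg[OF A za(1) rep_in[OF A]]] by blast
  obtain g2 where g2: "g2 \<in> EM P" "negligible g2" "\<forall>x\<in>I. \<bar>b1 x - rep B x\<bar> \<le> g2 x"
    using majorant[OF P S EM_diff[OF P E(4) E(6)] same_cls_neg[OF B zb(1) rep_in[OF B]]] by blast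
  obtain g3 where g3: "g3 \<in> EM P" "negligible g3" "\<forall>x\<in>I. \<bar>z1 x - z2 x\<bar> \<le> g3 x"
    using majorant[OF P S EM_diff[OF P E(1) E(2)] same_cls_neg[OF Z za(2) zb(2)]] by blast
  define h where "h = (\<lambda>x. d0 x + g1 x + g2 x + g3 x)"
  have hE: "h \<in> EM P" unfolding h_def
    by (intro EM_add[OF P] d0_props g1 g2 g3)
  have hn: "negligible h" unfolding h_def by (intro neg_add d0_props g1 g2 g3)
  have m: "(\<lambda>x. z1 x + h x) \<in> Z"
    by (rule in_cls_of[OF Z za(2) EM_add[OF P E(1) hE]]) (simp add: neg_uminus[OF hn])
  have p: "\<forall>x\<in>I. u x \<le> z1 x + h x"
  proof
    fix x assume x: "x \<in> I"
    have f: "a1 x \<le> z1 x" "b1 x \<le> z2 x" "\<bar>a1 x - rep A x\<bar> \<le> g1 x" "\<bar>b1 x - rep B x\<bar> \<le> g2 x"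
      "\<bar>z1 x - z2 x\<bar> \<le> g3 x" "u x \<le> max (rep A x) (rep B x) + d0 x"
      using za zb g1 g2 g3 u(3) x by auto
    show "u x \<le> z1 x + h x" using f unfolding h_def max_def by (auto split: if_splits)
  qed
  show "gen_le P (jn A B) Z" unfolding u(2)
    by (rule gen_leI[OF self_in_cls[OF u(1)] m p])
qed

lemma fring_compat:
  assumes M: "meet_ok P d0 mt" and A: "A \<in> EM P // nrel P" and B: "B \<in> EM P // nrel P"
    and T: "T \<in> EM P // nrel P" and HT: "gen_le P (cls P (\<lambda>_. 0)) T"
  shows "mt A B \<otimes>\<^bsub>gen_ring P\<^esub> T = mt (A \<otimes>\<^bsub>gen_ring P\<^esub> T) (B \<otimes>\<^bsub>gen_ring P\<^esub> T)"
proof -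
  obtain t where t: "t \<in> T" "\<forall>x\<in>I. 0 \<le> t x" using nonneg_rep[OF T HT] by blast
  have tE: "t \<in> EM P" using quot_cls[OF T t(1)] by simp
  define rA where "rA = rep A"
  define rB where "rB = rep B"
  have rE: "rA \<in> EM P" "rB \<in> EM P" using rep_EM A B by (auto simp: rA_def rB_def)
  obtain u where u: "u \<in> EM P" "mt A B = cls P u"
    "\<forall>x\<in>I. min (rA x) (rB x) - d0 x \<le> u x \<and> u x \<le> min (rA x) (rB x)"
    using mt_props[OF M A B] unfolding rA_def rB_def by blast
  have AT: "A \<otimes>\<^bsub>gen_ring P\<^esub> T = cls P (\<lambda>x. rA x * t x)"
    unfolding rA_def by (rule mult_gen_rep[OF P A T rep_in[OF A] t(1)])
  have BT: "B \<otimes>\<^bsub>gen_ring P\<^esub> T = cls P (\<lambda>x. rB x * t x)"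
    unfolding rB_def by (rule mult_gen_rep[OF P B T rep_in[OF B] t(1)])
  have EAT: "(\<lambda>x. rA x * t x) \<in> EM P" "(\<lambda>x. rB x * t x) \<in> EM P"
    using EM_mult[OF P rE(1) tE] EM_mult[OF P rE(2) tE] by auto
  have QAT: "A \<otimes>\<^bsub>gen_ring P\<^esub> T \<in> EM P // nrel P" "B \<otimes>\<^bsub>gen_ring P\<^esub> T \<in> EM P // nrel P"
    unfolding AT BT using EAT by (auto intro: cls_in)
  define pA where "pA = rep (A \<otimes>\<^bsub>gen_ring P\<^esub> T)"
  define pB where "pB = rep (B \<otimes>\<^bsub>gen_ring P\<^esub> T)"
  have nA: "negligible (\<lambda>x. rA x * t x - pA x)" unfolding pA_def AT by (rule rep_cls_neg[OF EAT(1)])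
  have nB: "negligible (\<lambda>x. rB x * t x - pB x)" unfolding pB_def BT by (rule rep_cls_neg[OF EAT(2)])
  obtain v where v: "v \<in> EM P" "mt (A \<otimes>\<^bsub>gen_ring P\<^esub> T) (B \<otimes>\<^bsub>gen_ring P\<^esub> T) = cls P v"
    "\<forall>x\<in>I. min (pA x) (pB x) - d0 x \<le> v x \<and> v x \<le> min (pA x) (pB x)"
    using mt_props[OF M QAT] unfolding pA_def pB_def by blast
  have L: "mt A B \<otimes>\<^bsub>gen_ring P\<^esub> T = cls P (\<lambda>x. u x * t x)"
    unfolding u(2) by (rule mult_gen_rep[OF P cls_in[OF u(1)] T self_in_cls[OF u(1)] t(1)])
  have uE: "(\<lambda>x. u x * t x) \<in> EM P" by (rule EM_mult[OF P u(1) tE])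
  define h where "h = (\<lambda>x. \<bar>d0 x * t x\<bar> + \<bar>rA x * t x - pA x\<bar> + \<bar>rB x * t x - pB x\<bar> + \<bar>d0 x\<bar>)"
  have tm: "moderate t" using tE by (simp add: EM_def)
  have hn: "negligible h" unfolding h_def
    by (intro neg_add neg_abs nA nB neg_mult[OF _ tm] d0_props)
  have "negligible (\<lambda>x. u x * t x - v x)"
  proof (rule neg_le_I[OF hn], intro ballI)
    fix x assume x: "x \<in> I"
    have t0: "0 \<le> t x" using t x by auto
    have d0: "0 \<le> d0 x" using d0_props x by auto
    have ub: "min (rA x) (rB x) - d0 x \<le> u x" "u x \<le> min (rA x) (rB x)" using u(3) x by auto
    have vb: "min (pA x) (pB x) - d0 x \<le> v x" "v x \<le> min (pA x) (pB x)" using v(3) x by auto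
    have m1: "(min (rA x) (rB x) - d0 x) * t x \<le> u x * t x" using ub(1) t0 by (rule mult_right_mono)
    have m2: "u x * t x \<le> min (rA x) (rB x) * t x" using ub t0 by (intro mult_right_mono)
    have mt: "min (rA x) (rB x) * t x = min (rA x * t x) (rB x * t x)"
      using t0 by (simp add: min_def mult_right_mono mult_le_cancel_right) 
    have lip: "\<bar>min (rA x * t x) (rB x * t x) - min (pA x) (pB x)\<bar> \<le> \<bar>rA x * t x - pA x\<bar> + \<bar>rB x * t x - pB x\<bar>"
      by (rule min_lip)
    have dt: "0 \<le> d0 x * t x" using d0 t0 by simp
    have "\<bar>u x * t x - v x\<bar> \<le> h x"
      using m1 m2 mt lip vb dt d0 unfolding h_def by (simp add: left_diff_distrib abs_le_iff) linarith
    moreover have "0 \<le> h x" unfolding h_def by simp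
    ultimately show "\<bar>u x * t x - v x\<bar> \<le> \<bar>h x\<bar>" by simp
  qed
  then have "cls P (\<lambda>x. u x * t x) = cls P v" by (rule cls_eq[OF uE v(1)])
  then show ?thesis using L v(2) by simp
qed

theorem fring_gen:
  assumes M: "meet_ok P d0 mt" and J: "join_ok P d0 jn"
  shows "f_ring (gen_ring P) (gen_le P) mt jn"
proof -
  note C = carrier_gen[of P]
  have cr: "cring (gen_ring P)" by (rule cring_gen[OF P])
  have lor: "lattice_ordered_ring (gen_ring P) (gen_le P) mt jn"
    unfolding lattice_ordered_ring_def C zero_gen
  proof (intro conjI)
    show "ring (gen_ring P)" using cr by (simp add: cring_def)
    show "\<forall>A\<in>EM P // nrel P. gen_le P A A" using rep_in by (blast intro: gen_leI)
    show "\<forall>A\<in>EM P // nrel P. \<forall>B\<in>EM P // nrel P. gen_le P A B \<and> gen_le P B A \<longrightarrow> A = B"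
      using le_antisym_gen by blast
    show "\<forall>A\<in>EM P // nrel P. \<forall>B\<in>EM P // nrel P. \<forall>Z\<in>EM P // nrel P. gen_le P A B \<and> gen_le P B Z \<longrightarrow> gen_le P A Z"
      using le_trans_gen by blast
    show "\<forall>A\<in>EM P // nrel P. \<forall>B\<in>EM P // nrel P. \<forall>Z\<in>EM P // nrel P. gen_le P A B \<longrightarrow> gen_le P (A \<oplus>\<^bsub>gen_ring P\<^esub> Z) (B \<oplus>\<^bsub>gen_ring P\<^esub> Z)"
      using le_add_gen by blast
    show "\<forall>A\<in>EM P // nrel P. \<forall>B\<in>EM P // nrel P. gen_le P (cls P (\<lambda>_. 0)) A \<and> gen_le P (cls P (\<lambda>_. 0)) B \<longrightarrow> gen_le P (cls P (\<lambda>_. 0)) (A \<otimes>\<^bsub>gen_ring P\<^esub> B)"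
      using le_mult_gen by blast
    show "\<forall>A\<in>EM P // nrel P. \<forall>B\<in>EM P // nrel P. mt A B \<in> EM P // nrel P \<and> gen_le P (mt A B) A \<and> gen_le P (mt A B) B \<and>
        (\<forall>Z\<in>EM P // nrel P. gen_le P Z A \<and> gen_le P Z B \<longrightarrow> gen_le P Z (mt A B))"
      using meet_lemmas[OF M] by blast
    show "\<forall>A\<in>EM P // nrel P. \<forall>B\<in>EM P // nrel P. jn A B \<in> EM P // nrel P \<and> gen_le P A (jn A B) \<and> gen_le P B (jn A B) \<and>
        (\<forall>Z\<in>EM P // nrel P. gen_le P A Z \<and> gen_le P B Z \<longrightarrow> gen_le P (jn A B) Z)"
      using join_lemmas[OF J] by blast
  qed
  show ?thesis unfolding f_ring_def
  proof (intro conjI cr lor ballI impI)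
    fix A B T assume "A \<in> carrier (gen_ring P)" "B \<in> carrier (gen_ring P)" "T \<in> carrier (gen_ring P)"
      "gen_le P \<zero>\<^bsub>gen_ring P\<^esub> T"
    then show "mt A B \<otimes>\<^bsub>gen_ring P\<^esub> T = mt (A \<otimes>\<^bsub>gen_ring P\<^esub> T) (B \<otimes>\<^bsub>gen_ring P\<^esub> T)"
      using fring_compat[OF M] by (simp add: C zero_gen)
  qed
qed

end


lemma mod_abs: "moderate f \<Longrightarrow> moderate (\<lambda>x. \<bar>f x\<bar>)"
  by (erule mod_le) auto

lemma mod_min: assumes "moderate f" "moderate g" shows "moderate (\<lambda>x. min (f x) (g x))"
  by (rule mod_le[OF mod_add[OF mod_abs[OF assms(1)] mod_abs[OF assms(2)]]])
    (intro always_eventually allI, auto simp: min_def)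

lemma mod_max: assumes "moderate f" "moderate g" shows "moderate (\<lambda>x. max (f x) (g x))"
  by (rule mod_le[OF mod_add[OF mod_abs[OF assms(1)] mod_abs[OF assms(2)]]])
    (intro always_eventually allI, auto simp: max_def)

section \<open>The ring of all nets\<close>

lemma adm_all: "adm all_net" by (simp add: adm_def all_net_def)

lemma soft_all: "soft_abs all_net (\<lambda>_. 0)"
  unfolding soft_abs_def all_net_def using neg_0 by (auto intro!: exI[of _ "\<lambda>x. \<bar>_ x\<bar>"])

lemma EM_all: "f \<in> EM all_net \<longleftrightarrow> moderate f" by (simp add: EM_def all_net_def)

lemma meet_ok_all: "meet_ok all_net (\<lambda>_. 0) (gen_meet all_net)"
  unfolding meet_ok_def gen_meet_def
proof (intro ballI)
  fix A B assume A: "A \<in> EM all_net // nrel all_net" and B: "B \<in> EM all_net // nrel all_net"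
  have "(\<lambda>x. min (rep A x) (rep B x)) \<in> EM all_net"
    using rep_EM[OF A] rep_EM[OF B] by (simp add: EM_all mod_min)
  then show "\<exists>u\<in>EM all_net. cls all_net (\<lambda>x. min (rep A x) (rep B x)) = cls all_net u \<and>
     (\<forall>x\<in>I. min (rep A x) (rep B x) - 0 \<le> u x \<and> u x \<le> min (rep A x) (rep B x))"
    by (intro bexI[of _ "\<lambda>x. min (rep A x) (rep B x)"]) auto
qed

lemma join_ok_all: "join_ok all_net (\<lambda>_. 0) (gen_join all_net)"
  unfolding join_ok_def gen_join_def
proof (intro ballI)
  fix A B assume A: "A \<in> EM all_net // nrel all_net" and B: "B \<in> EM all_net // nrel all_net"
  have "(\<lambda>x. max (rep A x) (rep B x)) \<in> EM all_net"
    using rep_EM[OF A] rep_EM[OF B] by (simp add: EM_all mod_max)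
  then show "\<exists>u\<in>EM all_net. cls all_net (\<lambda>x. max (rep A x) (rep B x)) = cls all_net u \<and>
     (\<forall>x\<in>I. max (rep A x) (rep B x) \<le> u x \<and> u x \<le> max (rep A x) (rep B x) + 0)"
    by (intro bexI[of _ "\<lambda>x. max (rep A x) (rep B x)"]) auto
qed

theorem Rt_result: "reduced_normal_f_ring Rt le_t meet_t join_t"
  unfolding reduced_normal_f_ring_def Rt_def le_t_def meet_t_def join_t_def
  using fring_gen[OF adm_all soft_all meet_ok_all join_ok_all] reduced_gen[OF adm_all]
    normal_gen[OF adm_all] by (auto simp: all_net_def)


section \<open>Smooth nets\<close>

definition smooth_set :: "(real \<Rightarrow> real) set \<Rightarrow> bool" where
  "smooth_set F \<longleftrightarrow> (\<forall>g\<in>F. \<exists>g'\<in>F. \<forall>x\<in>I. (g has_real_derivative g' x) (at x within I))"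

lemma sm_from_set:
  assumes F: "smooth_set F" and r: "r \<in> F"
  shows "smooth_net r"
proof -
  have "\<forall>g\<in>F. \<exists>g'. g' \<in> F \<and> (\<forall>x\<in>I. (g has_real_derivative g' x) (at x within I))"
    using F unfolding smooth_set_def by blast
  then obtain d where d: "\<And>g. g \<in> F \<Longrightarrow> d g \<in> F \<and> (\<forall>x\<in>I. (g has_real_derivative d g x) (at x within I))"
    by metis
  define D where "D k = (d ^^ k) r" for k
  have DF: "D k \<in> F" for k by (induction k) (auto simp: D_def r d)
  show ?thesis unfolding smooth_net_def
  proof (intro exI[of _ D] conjI allI)
    show "D 0 = r" by (simp add: D_def)
    fix k show "\<forall>x\<in>I. (D k has_real_derivative D (Suc k) x) (at x within I)"
      using d[OF DF[of k]] by (simp add: D_def)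
  qed
qed

lemma smooth_set_SM: "smooth_set {f. smooth_net f}"
  unfolding smooth_set_def
proof
  fix g assume "g \<in> {f. smooth_net f}"
  then obtain D where D: "D 0 = g" "\<forall>k. \<forall>x\<in>I. (D k has_real_derivative D (Suc k) x) (at x within I)"
    unfolding smooth_net_def by blast
  have "smooth_net (D 1)" unfolding smooth_net_def
    by (rule exI[of _ "\<lambda>k. D (Suc k)"]) (use D in auto)
  then show "\<exists>g'\<in>{f. smooth_net f}. \<forall>x\<in>I. (g has_real_derivative g' x) (at x within I)"
    using D by (intro bexI[of _ "D 1"]) auto
qed

inductive_set alg :: "(real \<Rightarrow> real) set \<Rightarrow> (real \<Rightarrow> real) set" for B where
  base: "g \<in> B \<Longrightarrow> g \<in> alg B"
| const: "(\<lambda>_. c) \<in> alg B"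
| add: "f \<in> alg B \<Longrightarrow> g \<in> alg B \<Longrightarrow> (\<lambda>x. f x + g x) \<in> alg B"
| mult: "f \<in> alg B \<Longrightarrow> g \<in> alg B \<Longrightarrow> (\<lambda>x. f x * g x) \<in> alg B"

lemma alg_smooth:
  assumes H: "\<forall>g\<in>B. \<exists>g'\<in>alg B. \<forall>x\<in>I. (g has_real_derivative g' x) (at x within I)"
  shows "smooth_set (alg B)"
  unfolding smooth_set_def
proof
  fix g assume "g \<in> alg B"
  then show "\<exists>g'\<in>alg B. \<forall>x\<in>I. (g has_real_derivative g' x) (at x within I)"
  proof induction
    case (base g) then show ?case using H by blast
  next
    case (const c) then show ?case by (intro bexI[of _ "\<lambda>_. 0"] alg.const) auto
  next
    case (add f g)
    then obtain f' g' where f': "f' \<in> alg B" "\<forall>x\<in>I. (f has_real_derivative f' x) (at x within I)"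
      and g': "g' \<in> alg B" "\<forall>x\<in>I. (g has_real_derivative g' x) (at x within I)" by blast
    show ?case
      by (rule bexI[of _ "\<lambda>x. f' x + g' x"]) (use f' g' in \<open>auto intro!: alg.add DERIV_add\<close>)
  next
    case (mult f g)
    then obtain f' g' where f': "f' \<in> alg B" "\<forall>x\<in>I. (f has_real_derivative f' x) (at x within I)"
      and g': "g' \<in> alg B" "\<forall>x\<in>I. (g has_real_derivative g' x) (at x within I)" by blast
    have "\<forall>x\<in>I. ((\<lambda>x. f x * g x) has_real_derivative f' x * g x + f x * g' x) (at x within I)"
    proof
      fix x assume x: "x \<in> I"
      show "((\<lambda>x. f x * g x) has_real_derivative f' x * g x + f x * g' x) (at x within I)"
        by (rule DERIV_cong[OF DERIV_mult[OF f'(2)[rule_format, OF x] g'(2)[rule_format, OF x]]])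
          (simp add: mult.commute)
    qed
    moreover have "(\<lambda>x. f' x * g x + f x * g' x) \<in> alg B"
      using f' g' mult by (intro alg.add alg.mult) auto
    ultimately show ?case by (rule bexI[of _ "\<lambda>x. f' x * g x + f x * g' x"])
  qed
qed

lemma SM_alg:
  assumes "\<forall>g\<in>B. \<exists>g'\<in>alg ({f. smooth_net f} \<union> B). \<forall>x\<in>I. (g has_real_derivative g' x) (at x within I)"
    and "f \<in> alg ({f. smooth_net f} \<union> B)"
  shows "smooth_net f"
proof (rule sm_from_set[OF alg_smooth assms(2)], intro ballI)
  fix g assume g: "g \<in> {f. smooth_net f} \<union> B"
  show "\<exists>g'\<in>alg ({f. smooth_net f} \<union> B). \<forall>x\<in>I. (g has_real_derivative g' x) (at x within I)"
  proof (cases "g \<in> B")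
    case True then show ?thesis using assms(1) by blast
  next
    case False
    then have "g \<in> {f. smooth_net f}" using g by blast
    then obtain g' where "g' \<in> {f. smooth_net f}" "\<forall>x\<in>I. (g has_real_derivative g' x) (at x within I)"
      using smooth_set_SM unfolding smooth_set_def by blast
    then show ?thesis by (intro bexI[of _ g'] alg.base) auto
  qed
qed

lemma sm_basic:
  "smooth_net (\<lambda>_. c)"
  "smooth_net f \<Longrightarrow> smooth_net g \<Longrightarrow> smooth_net (\<lambda>x. f x + g x)"
  "smooth_net f \<Longrightarrow> smooth_net g \<Longrightarrow> smooth_net (\<lambda>x. f x * g x)"
  by (rule SM_alg[of "{}"]; auto intro: alg.intros)+

lemma adm_sm: "adm smooth_net"
  unfolding adm_def using sm_basic by blast

lemma sm_inverse:
  assumes h: "smooth_net h" and pos: "\<forall>x\<in>I. h x > 0"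
  shows "smooth_net (\<lambda>x. inverse (h x))"
proof (rule SM_alg[of "{\<lambda>x. inverse (h x)}"])
  show "(\<lambda>x. inverse (h x)) \<in> alg ({f. smooth_net f} \<union> {\<lambda>x. inverse (h x)})" by (auto intro: alg.intros)
  obtain h' where h': "smooth_net h'" "\<forall>x\<in>I. (h has_real_derivative h' x) (at x within I)"
    using smooth_set_SM h unfolding smooth_set_def by blast
  let ?A = "alg ({f. smooth_net f} \<union> {\<lambda>x. inverse (h x)})"
  define G where "G = (\<lambda>x. ((\<lambda>_. -1::real) x * h' x) * (inverse (h x) * inverse (h x)))"
  have "(\<lambda>x. ((\<lambda>_. -1) x * h' x) * (inverse (h x) * inverse (h x))) \<in> ?A"
    using h' by (intro alg.mult alg.const) (auto intro: alg.base)
  moreover have "\<forall>x\<in>I. ((\<lambda>x. inverse (h x)) has_real_derivative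
      ((\<lambda>_. -1) x * h' x) * (inverse (h x) * inverse (h x))) (at x within I)"
  proof
    fix x assume x: "x \<in> I"
    show "((\<lambda>x. inverse (h x)) has_real_derivative
      ((\<lambda>_. -1) x * h' x) * (inverse (h x) * inverse (h x))) (at x within I)"
      by (rule DERIV_cong[OF DERIV_inverse_fun[OF h'(2)[rule_format, OF x]]])
        (use pos x in \<open>auto simp: power2_eq_square\<close>)
  qed
  ultimately have "G \<in> ?A \<and> (\<forall>x\<in>I. ((\<lambda>x. inverse (h x)) has_real_derivative G x) (at x within I))"
    unfolding G_def by simp
  then show "\<forall>g\<in>{\<lambda>x. inverse (h x)}. \<exists>g'\<in>?A. \<forall>x\<in>I. (g has_real_derivative g' x) (at x within I)"
    by blast
qed


lemma inv_deriv:
  assumes h: "smooth_net h" and pos: "\<forall>x\<in>I. h x > 0" and inB: "(\<lambda>x. inverse (h x)) \<in> B"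
  shows "\<exists>g'\<in>alg ({f. smooth_net f} \<union> B). \<forall>x\<in>I. ((\<lambda>x. inverse (h x)) has_real_derivative g' x) (at x within I)"
proof -
  obtain h' where h': "smooth_net h'" "\<forall>x\<in>I. (h has_real_derivative h' x) (at x within I)"
    using smooth_set_SM h unfolding smooth_set_def by blast
  let ?A = "alg ({f. smooth_net f} \<union> B)"
  define G where "G = (\<lambda>x. ((\<lambda>_. -1::real) x * h' x) * (inverse (h x) * inverse (h x)))"
  have "G \<in> ?A" unfolding G_def
    using h' inB by (intro alg.mult alg.const) (auto intro: alg.base)
  moreover have "\<forall>x\<in>I. ((\<lambda>x. inverse (h x)) has_real_derivative G x) (at x within I)"
  proof
    fix x assume x: "x \<in> I"
    show "((\<lambda>x. inverse (h x)) has_real_derivative G x) (at x within I)"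
      unfolding G_def
      by (rule DERIV_cong[OF DERIV_inverse_fun[OF h'(2)[rule_format, OF x]]])
        (use pos x in \<open>auto simp: power2_eq_square\<close>)
  qed
  ultimately show ?thesis by (rule bexI[of _ G, rotated])
qed

lemma sqrt_inv: "y > 0 \<Longrightarrow> inverse (sqrt y) = sqrt y * inverse y"
  using sqrt_divide_self_eq[of y] by (simp add: divide_inverse)

lemma sm_sqrt:
  assumes h: "smooth_net h" and pos: "\<forall>x\<in>I. h x > 0"
  shows "smooth_net (\<lambda>x. sqrt (h x))"
proof (rule SM_alg[of "{\<lambda>x. sqrt (h x), \<lambda>x. inverse (h x)}"])
  let ?B = "{\<lambda>x. sqrt (h x), \<lambda>x. inverse (h x)}"
  let ?A = "alg ({f. smooth_net f} \<union> ?B)"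
  show "(\<lambda>x. sqrt (h x)) \<in> ?A" by (auto intro: alg.intros)
  obtain h' where h': "smooth_net h'" "\<forall>x\<in>I. (h has_real_derivative h' x) (at x within I)"
    using smooth_set_SM h unfolding smooth_set_def by blast
  define G where "G = (\<lambda>x. ((\<lambda>_. 1/2::real) x * h' x) * (sqrt (h x) * inverse (h x)))"
  have "G \<in> ?A" unfolding G_def
    using h' by (intro alg.mult alg.const) (auto intro: alg.base)
  moreover have "\<forall>x\<in>I. ((\<lambda>x. sqrt (h x)) has_real_derivative G x) (at x within I)"
  proof
    fix x assume x: "x \<in> I"
    have hx: "h x > 0" using pos x by auto
    show "((\<lambda>x. sqrt (h x)) has_real_derivative G x) (at x within I)"
      unfolding G_def
      by (rule DERIV_cong[OF DERIV_chain'[OF h'(2)[rule_format, OF x] DERIV_real_sqrt[OF hx]]])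
        (simp add: sqrt_inv[OF hx])
  qed
  ultimately have s: "\<exists>g'\<in>?A. \<forall>x\<in>I. ((\<lambda>x. sqrt (h x)) has_real_derivative g' x) (at x within I)"
    by (rule bexI[of _ G, rotated])
  have i: "\<exists>g'\<in>?A. \<forall>x\<in>I. ((\<lambda>x. inverse (h x)) has_real_derivative g' x) (at x within I)"
    by (rule inv_deriv[OF h pos]) simp
  show "\<forall>g\<in>?B. \<exists>g'\<in>?A. \<forall>x\<in>I. (g has_real_derivative g' x) (at x within I)"
    using s i by blast
qed

lemma sm_ident: "smooth_net (\<lambda>x. x)"
proof (rule SM_alg[of "{\<lambda>x. x}"])
  show "(\<lambda>x. x) \<in> alg ({f. smooth_net f} \<union> {\<lambda>x. x})" by (auto intro: alg.intros)
  have "(\<lambda>_. 1) \<in> alg ({f. smooth_net f} \<union> {\<lambda>x. x})" by (rule alg.const)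
  moreover have "\<forall>x\<in>I. ((\<lambda>x. x) has_real_derivative (\<lambda>_. 1) x) (at x within I)" by simp
  ultimately show "\<forall>g\<in>{\<lambda>x. x}. \<exists>g'\<in>alg ({f. smooth_net f} \<union> {\<lambda>x. x}). \<forall>x\<in>I. (g has_real_derivative g' x) (at x within I)"
    by (auto intro: bexI[rotated])
qed

lemma I_pos: "x \<in> I \<Longrightarrow> x > 0" by (simp add: I_def)

lemma sm_dl: "smooth_net dl"
proof (rule SM_alg[of "{dl, \<lambda>x. inverse x}"])
  let ?B = "{dl, \<lambda>x. inverse x}"
  let ?A = "alg ({f. smooth_net f} \<union> ?B)"
  show "dl \<in> ?A" by (auto intro: alg.intros)
  define G where "G = (\<lambda>x. dl x * (inverse x * inverse x))"
  have "G \<in> ?A" unfolding G_def by (intro alg.mult) (auto intro: alg.base)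
  moreover have "\<forall>x\<in>I. (dl has_real_derivative G x) (at x within I)"
  proof
    fix x assume x: "x \<in> I"
    have x0: "x \<noteq> 0" using I_pos[OF x] by simp
    have "((\<lambda>x. - inverse x) has_real_derivative - (- (inverse x ^ Suc (Suc 0)))) (at x within I)"
      by (rule DERIV_minus[OF DERIV_inverse[OF x0]])
    from DERIV_chain'[OF this DERIV_exp]
    show "(dl has_real_derivative G x) (at x within I)"
      unfolding G_def dl_def by (rule DERIV_cong) (simp add: power2_eq_square)
  qed
  ultimately have s: "\<exists>g'\<in>?A. \<forall>x\<in>I. (dl has_real_derivative g' x) (at x within I)"
    by (rule bexI[of _ G, rotated])
  have i: "\<exists>g'\<in>?A. \<forall>x\<in>I. ((\<lambda>x. inverse x) has_real_derivative g' x) (at x within I)"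
    using inv_deriv[OF sm_ident, of ?B] I_pos by simp
  show "\<forall>g\<in>?B. \<exists>g'\<in>?A. \<forall>x\<in>I. (g has_real_derivative g' x) (at x within I)"
    using s i by blast
qed


section \<open>The smooth ring\<close>

lemma min_lip2: "\<bar>min a b - min a' b'\<bar> \<le> \<bar>a - a'\<bar> + \<bar>b - b'\<bar>" for a b a' b' :: real
  by (auto simp: min_def abs_if)

lemma max_lip2: "\<bar>max a b - max a' b'\<bar> \<le> \<bar>a - a'\<bar> + \<bar>b - b'\<bar>" for a b a' b' :: real
  by (auto simp: max_def abs_if)

definition d0sm :: "real \<Rightarrow> real" where "d0sm x = sqrt (dl x)"

lemma sm_d0: "smooth_net d0sm"
  unfolding d0sm_def by (rule sm_sqrt[OF sm_dl]) (simp add: dl_pos)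

lemma sm_softabs:
  assumes f: "smooth_net f" shows "smooth_net (\<lambda>x. sqrt (f x * f x + dl x))"
proof -
  have "smooth_net (\<lambda>x. f x * f x + dl x)" by (intro sm_basic(2)[OF sm_basic(3)[OF f f] sm_dl])
  then show ?thesis by (rule sm_sqrt) (use dl_pos in \<open>auto intro: add_nonneg_pos\<close>)
qed

lemma softabs_bounds:
  fixes a d :: real assumes d: "d > 0"
  shows "\<bar>a\<bar> \<le> sqrt (a * a + d)" "sqrt (a * a + d) \<le> \<bar>a\<bar> + sqrt d"
proof -
  have "sqrt (a * a) \<le> sqrt (a * a + d)" using d by (intro real_sqrt_le_mono) auto
  then show "\<bar>a\<bar> \<le> sqrt (a * a + d)" by simp
  have "sqrt (a * a + d) \<le> sqrt (a * a) + sqrt d" using d by (intro sqrt_add_le_add_sqrt) auto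
  then show "sqrt (a * a + d) \<le> \<bar>a\<bar> + sqrt d" by simp
qed

lemma soft_sm: "soft_abs smooth_net d0sm"
  unfolding soft_abs_def
proof (intro conjI allI impI ballI)
  show "smooth_net d0sm" by (rule sm_d0)
  show "negligible d0sm" unfolding d0sm_def by (rule neg_sqrt_dl)
  fix x assume "x \<in> I" then show "0 \<le> d0sm x" using dl_pos[of x] by (simp add: d0sm_def)
next
  fix f assume f: "smooth_net f"
  show "\<exists>g. smooth_net g \<and> (\<forall>x\<in>I. \<bar>f x\<bar> \<le> g x \<and> g x \<le> \<bar>f x\<bar> + d0sm x)"
    using sm_softabs[OF f] softabs_bounds[OF dl_pos] unfolding d0sm_def
    by (intro exI[of _ "\<lambda>x. sqrt (f x * f x + dl x)"]) auto
qed

lemma sm_chi: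
  assumes r: "smooth_net r" and s: "smooth_net s" shows "smooth_net (chi r s)"
proof -
  have e: "chi r s = (\<lambda>x. (s x * s x + dl x) * inverse ((r x * r x + s x * s x) + (\<lambda>_. 2) x * dl x))"
    by (rule ext) (simp add: chi_def power2_eq_square divide_inverse)
  have den: "smooth_net (\<lambda>x. (r x * r x + s x * s x) + (\<lambda>_. 2) x * dl x)"
    by (intro sm_basic sm_dl r s)
  have pos: "\<forall>x\<in>I. (r x * r x + s x * s x) + (\<lambda>_. 2::real) x * dl x > 0"
    using den_pos[of r _ s] by (simp add: power2_eq_square)
  show ?thesis unfolding e
    by (intro sm_basic(3) sm_basic(2) sm_dl s sm_inverse[OF den pos])
qed

lemma sm_cont: "smooth_net f \<Longrightarrow> cont_net f"
  unfolding smooth_net_def cont_net_def continuous_on_eq_continuous_within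
  by (auto intro: DERIV_continuous)

lemma EM_sm_cont: "f \<in> EM smooth_net \<Longrightarrow> f \<in> EM cont_net"
  by (simp add: EM_def sm_cont)

lemma carrier_Rsm: "carrier Rsm = EM smooth_net // nrel smooth_net"
  by (simp add: Rsm_def carrier_gen)

lemma tau_inj: "inj_on tau_sm (carrier Rsm)"
proof (rule inj_onI)
  fix A B assume A: "A \<in> carrier Rsm" and B: "B \<in> carrier Rsm" and e: "tau_sm A = tau_sm B"
  have AQ: "A \<in> EM smooth_net // nrel smooth_net" and BQ: "B \<in> EM smooth_net // nrel smooth_net"
    using A B by (auto simp: carrier_Rsm)
  have E: "rep A \<in> EM smooth_net" "rep B \<in> EM smooth_net" using rep_EM AQ BQ by auto
  have "cls cont_net (rep A) = cls cont_net (rep B)" using e by (simp add: tau_sm_def)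
  then have "negligible (\<lambda>x. rep A x - rep B x)"
    using cls_eq_iff[OF EM_sm_cont[OF E(1)] EM_sm_cont[OF E(2)]] by blast
  then have "cls smooth_net (rep A) = cls smooth_net (rep B)" by (rule cls_eq[OF E])
  then show "A = B" using rep_cls[OF AQ] rep_cls[OF BQ] by simp
qed

lemma tau_op:
  fixes op :: "real \<Rightarrow> real \<Rightarrow> real"
  assumes lip: "\<And>a b a' b'. \<bar>op a b - op a' b'\<bar> \<le> \<bar>a - a'\<bar> + \<bar>b - b'\<bar>"
    and cop: "\<And>f g. f \<in> EM cont_net \<Longrightarrow> g \<in> EM cont_net \<Longrightarrow> (\<lambda>x. op (f x) (g x)) \<in> EM cont_net"
    and A: "A \<in> EM smooth_net // nrel smooth_net" and B: "B \<in> EM smooth_net // nrel smooth_net"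
    and u: "u \<in> EM smooth_net" "\<forall>x\<in>I. \<bar>u x - op (rep A x) (rep B x)\<bar> \<le> d0sm x"
  shows "tau_sm (cls smooth_net u) = cls cont_net (\<lambda>x. op (rep (tau_sm A) x) (rep (tau_sm B) x))"
proof -
  define rA where "rA = rep A"
  define rB where "rB = rep B"
  have E: "rA \<in> EM cont_net" "rB \<in> EM cont_net" using rep_EM A B EM_sm_cont by (auto simp: rA_def rB_def)
  define rX where "rX = rep (tau_sm A)"
  define rY where "rY = rep (tau_sm B)"
  have nX: "negligible (\<lambda>x. rA x - rX x)" unfolding rX_def tau_sm_def rA_def[symmetric]
    by (rule rep_cls_neg[OF E(1)])
  have nY: "negligible (\<lambda>x. rB x - rY x)" unfolding rY_def tau_sm_def rB_def[symmetric]
    by (rule rep_cls_neg[OF E(2)])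
  have EX: "rX \<in> EM cont_net" "rY \<in> EM cont_net" unfolding rX_def rY_def tau_sm_def
    using E by (auto simp: rA_def rB_def intro!: rep_EM cls_in)
  define v where "v = rep (cls smooth_net u)"
  have nv: "negligible (\<lambda>x. u x - v x)" unfolding v_def by (rule rep_cls_neg[OF u(1)])
  have vE: "v \<in> EM cont_net" unfolding v_def using rep_EM[OF cls_in[OF u(1)]] EM_sm_cont by blast
  have d0n: "negligible d0sm" unfolding d0sm_def by (rule neg_sqrt_dl)
  define h where "h = (\<lambda>x. \<bar>u x - v x\<bar> + d0sm x + \<bar>rA x - rX x\<bar> + \<bar>rB x - rY x\<bar>)"
  have hn: "negligible h" unfolding h_def by (intro neg_add neg_abs nv nX nY d0n)
  have "negligible (\<lambda>x. v x - op (rX x) (rY x))"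
  proof (rule neg_le_I[OF hn], intro ballI)
    fix x assume x: "x \<in> I"
    have a: "\<bar>u x - op (rA x) (rB x)\<bar> \<le> d0sm x" using u(2) x by (simp add: rA_def rB_def)
    have b: "\<bar>op (rA x) (rB x) - op (rX x) (rY x)\<bar> \<le> \<bar>rA x - rX x\<bar> + \<bar>rB x - rY x\<bar>" by (rule lip)
    have "\<bar>v x - op (rX x) (rY x)\<bar> \<le> h x" using a b unfolding h_def by linarith
    moreover have "0 \<le> h x" unfolding h_def d0sm_def using dl_pos[of x] by simp
    ultimately show "\<bar>v x - op (rX x) (rY x)\<bar> \<le> \<bar>h x\<bar>" by simp
  qed
  then have "cls cont_net v = cls cont_net (\<lambda>x. op (rX x) (rY x))"
    by (rule cls_eq[OF vE cop[OF EX]])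
  then show ?thesis by (simp add: tau_sm_def v_def rX_def rY_def)
qed

lemma EM_cont_min: "f \<in> EM cont_net \<Longrightarrow> g \<in> EM cont_net \<Longrightarrow> (\<lambda>x. min (f x) (g x)) \<in> EM cont_net"
  by (auto simp: EM_def cont_net_def intro: continuous_on_min mod_min)

lemma EM_cont_max: "f \<in> EM cont_net \<Longrightarrow> g \<in> EM cont_net \<Longrightarrow> (\<lambda>x. max (f x) (g x)) \<in> EM cont_net"
  by (auto simp: EM_def cont_net_def intro: continuous_on_max mod_max)

lemma meet_ok_sm: "meet_ok smooth_net d0sm meet_sm"
  unfolding meet_ok_def
proof (intro ballI)
  fix A B assume A: "A \<in> EM smooth_net // nrel smooth_net" and B: "B \<in> EM smooth_net // nrel smooth_net"
  define rA where "rA = rep A"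
  define rB where "rB = rep B"
  have E: "rA \<in> EM smooth_net" "rB \<in> EM smooth_net" using rep_EM A B by (auto simp: rA_def rB_def)
  define S where "S = (\<lambda>x. sqrt ((rA x - rB x) * (rA x - rB x) + dl x))"
  define u where "u = (\<lambda>x. (\<lambda>_. 1/2::real) x * ((rA x + rB x) - S x))"
  have smd: "smooth_net (\<lambda>x. rA x - rB x)" using adm_diff[OF adm_sm, of rA rB] E by (simp add: EM_def)
  have smS: "smooth_net S" unfolding S_def using sm_softabs[OF smd] .
  have Sb: "\<forall>x. \<bar>rA x - rB x\<bar> \<le> S x \<and> S x \<le> \<bar>rA x - rB x\<bar> + d0sm x"
    unfolding S_def d0sm_def using softabs_bounds[OF dl_pos] by auto
  have smu: "smooth_net u" unfolding u_def
    by (intro sm_basic adm_diff[OF adm_sm] smS) (use E in \<open>auto simp: EM_def\<close>)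
  have Sm: "moderate S"
  proof (rule mod_le)
    show "moderate (\<lambda>x. \<bar>rA x - rB x\<bar> + d0sm x)"
      using E neg_mod[OF neg_sqrt_dl] by (intro mod_add mod_abs mod_diff) (auto simp: EM_def d0sm_def)
    show "\<forall>\<^sub>F x in at_right 0. \<bar>S x\<bar> \<le> \<bar>\<bar>rA x - rB x\<bar> + d0sm x\<bar>"
      using Sb by (intro always_eventually allI) (smt (verit))
  qed
  have "moderate u" unfolding u_def
    by (intro mod_mult mod_const mod_diff mod_add Sm) (use E in \<open>auto simp: EM_def\<close>)
  then have uE: "u \<in> EM smooth_net" using smu by (simp add: EM_def)
  have ub: "\<forall>x\<in>I. min (rA x) (rB x) - d0sm x \<le> u x \<and> u x \<le> min (rA x) (rB x)"
  proof
    fix x assume x: "x \<in> I"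
    have "\<bar>rA x - rB x\<bar> \<le> S x" "S x \<le> \<bar>rA x - rB x\<bar> + d0sm x" "0 \<le> d0sm x"
      using Sb dl_pos[of x] by (auto simp: d0sm_def)
    then show "min (rA x) (rB x) - d0sm x \<le> u x \<and> u x \<le> min (rA x) (rB x)"
      unfolding u_def min_def by (auto split: if_splits)
  qed
  have "meet_sm A B = cls smooth_net u"
    unfolding meet_sm_def gen_meet_def
  proof (rule the_inv_into_f_eq[OF tau_inj])
    show "cls smooth_net u \<in> carrier Rsm" using cls_in[OF uE] by (simp add: carrier_Rsm)
    show "tau_sm (cls smooth_net u) = cls cont_net (\<lambda>\<epsilon>. min (rep (tau_sm A) \<epsilon>) (rep (tau_sm B) \<epsilon>))"
    proof (rule tau_op[OF min_lip2 EM_cont_min A B uE])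
      show "\<forall>x\<in>I. \<bar>u x - min (rep A x) (rep B x)\<bar> \<le> d0sm x" using ub by (auto simp: rA_def rB_def)
    qed
  qed
  then show "\<exists>u\<in>EM smooth_net. meet_sm A B = cls smooth_net u \<and>
     (\<forall>x\<in>I. min (rep A x) (rep B x) - d0sm x \<le> u x \<and> u x \<le> min (rep A x) (rep B x))"
    using uE ub unfolding rA_def rB_def by blast
qed

lemma join_ok_sm: "join_ok smooth_net d0sm join_sm"
  unfolding join_ok_def
proof (intro ballI)
  fix A B assume A: "A \<in> EM smooth_net // nrel smooth_net" and B: "B \<in> EM smooth_net // nrel smooth_net"
  define rA where "rA = rep A"
  define rB where "rB = rep B"
  have E: "rA \<in> EM smooth_net" "rB \<in> EM smooth_net" using rep_EM A B by (auto simp: rA_def rB_def)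
  define S where "S = (\<lambda>x. sqrt ((rA x - rB x) * (rA x - rB x) + dl x))"
  define u where "u = (\<lambda>x. (\<lambda>_. 1/2::real) x * ((rA x + rB x) + S x))"
  have smd: "smooth_net (\<lambda>x. rA x - rB x)" using adm_diff[OF adm_sm, of rA rB] E by (simp add: EM_def)
  have smS: "smooth_net S" unfolding S_def using sm_softabs[OF smd] .
  have Sb: "\<forall>x. \<bar>rA x - rB x\<bar> \<le> S x \<and> S x \<le> \<bar>rA x - rB x\<bar> + d0sm x"
    unfolding S_def d0sm_def using softabs_bounds[OF dl_pos] by auto
  have smu: "smooth_net u" unfolding u_def
    by (intro sm_basic smS) (use E in \<open>auto simp: EM_def\<close>)
  have Sm: "moderate S"
  proof (rule mod_le)
    show "moderate (\<lambda>x. \<bar>rA x - rB x\<bar> + d0sm x)"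
      using E neg_mod[OF neg_sqrt_dl] by (intro mod_add mod_abs mod_diff) (auto simp: EM_def d0sm_def)
    show "\<forall>\<^sub>F x in at_right 0. \<bar>S x\<bar> \<le> \<bar>\<bar>rA x - rB x\<bar> + d0sm x\<bar>"
      using Sb by (intro always_eventually allI) (smt (verit))
  qed
  have "moderate u" unfolding u_def
    by (intro mod_mult mod_const mod_add Sm) (use E in \<open>auto simp: EM_def\<close>)
  then have uE: "u \<in> EM smooth_net" using smu by (simp add: EM_def)
  have ub: "\<forall>x\<in>I. max (rA x) (rB x) \<le> u x \<and> u x \<le> max (rA x) (rB x) + d0sm x"
  proof
    fix x assume x: "x \<in> I"
    have "\<bar>rA x - rB x\<bar> \<le> S x" "S x \<le> \<bar>rA x - rB x\<bar> + d0sm x" "0 \<le> d0sm x"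
      using Sb dl_pos[of x] by (auto simp: d0sm_def)
    then show "max (rA x) (rB x) \<le> u x \<and> u x \<le> max (rA x) (rB x) + d0sm x"
      unfolding u_def max_def by (auto split: if_splits)
  qed
  have "join_sm A B = cls smooth_net u"
    unfolding join_sm_def gen_join_def
  proof (rule the_inv_into_f_eq[OF tau_inj])
    show "cls smooth_net u \<in> carrier Rsm" using cls_in[OF uE] by (simp add: carrier_Rsm)
    show "tau_sm (cls smooth_net u) = cls cont_net (\<lambda>\<epsilon>. max (rep (tau_sm A) \<epsilon>) (rep (tau_sm B) \<epsilon>))"
    proof (rule tau_op[OF max_lip2 EM_cont_max A B uE])
      show "\<forall>x\<in>I. \<bar>u x - max (rep A x) (rep B x)\<bar> \<le> d0sm x" using ub by (auto simp: rA_def rB_def)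
    qed
  qed
  then show "\<exists>u\<in>EM smooth_net. join_sm A B = cls smooth_net u \<and>
     (\<forall>x\<in>I. max (rep A x) (rep B x) \<le> u x \<and> u x \<le> max (rep A x) (rep B x) + d0sm x)"
    using uE ub unfolding rA_def rB_def by blast
qed



theorem Rsm_result: "reduced_normal_f_ring Rsm le_sm meet_sm join_sm"
  unfolding reduced_normal_f_ring_def Rsm_def le_sm_def
  using fring_gen[OF adm_sm soft_sm meet_ok_sm join_ok_sm] reduced_gen[OF adm_sm]
    normal_gen[OF adm_sm sm_chi] by blast

theorem corollary4p21:
  shows "reduced_normal_f_ring Rt le_t meet_t join_t \<and> reduced_normal_f_ring Rsm le_sm meet_sm join_sm"
  using Rt_result Rsm_result by blast

end
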